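(* Let $\mathbf{k}$ be an algebraically closed field, $G=\mathrm{GL}_n$, $(\rho,M)$ a finite-dimensional rational representation, $\underline{G}=G\ltimes_\rho M$, $\underline{\mathcal{N}}=\mathcal{N}\times M$. For a partition $\lambda$ of $n$ let $J=J_\lambda$ be the Jordan standard nilpotent matrix of type $\lambda$, $G_J$ its centralizer in $G$, and $J M=\mathsf{d}\rho(J)(M)$, a $G_J$-submodule of $M$. Then: (1) for any $w\in M$, every element of $\{J\}\times(w+JM)$ lies in the $\underline{G}$-orbit of $(J,w)$; (2) $\underline{\mathcal{N}}$ has finitely many $\underline{G}$-orbits if and only if for every partition $\lambda$ of $n$, $G_{J_\lambda}$ has finitely many orbits on $M/J_\lambda M$.
   Context: $\underline{G}$ is $G\times M$ with product $(g_1,v_1)(g_2,v_2)=(g_1g_2,\rho(g_1)v_2+v_1)$, acting on $\mathfrak{gl}_n\times M$ by $\mathrm{Ad}(g,v)(X,w)=(\mathrm{Ad}(g)X,-\mathsf{d}\rho(\mathrm{Ad}(g)X)v+\rho(g)w)$. $\mathcal{N}$ is the nilpotent cone of $\mathfrak{gl}_n$. $J_\lambda$ is block diagonal with blocks $J_{\lambda_i}$ having $1$ on the superdiagonal and $0$ elsewhere. *)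

theory Defs
  imports "Jordan_Normal_Form.Jordan_Normal_Form" "HOL-Computational_Algebra.Polynomial"
begin

definition alg_closed :: "'k::field itself \<Rightarrow> bool" where
  "alg_closed _ \<longleftrightarrow> (\<forall>p :: 'k poly. degree p > 0 \<longrightarrow> (\<exists>x. poly p x = 0))"

definition GL :: "nat \<Rightarrow> 'k::field mat set" where
  "GL n = {g \<in> carrier_mat n n. invertible_mat g}"

inductive_set poly_fun :: "nat \<Rightarrow> ('k::field mat \<Rightarrow> 'k) set" for n where
  const: "(\<lambda>A. c) \<in> poly_fun n"
| coord: "i < n \<Longrightarrow> j < n \<Longrightarrow> (\<lambda>A. A $$ (i,j)) \<in> poly_fun n"
| add: "p \<in> poly_fun n \<Longrightarrow> q \<in> poly_fun n \<Longrightarrow> (\<lambda>A. p A + q A) \<in> poly_fun n"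
| mult: "p \<in> poly_fun n \<Longrightarrow> q \<in> poly_fun n \<Longrightarrow> (\<lambda>A. p A * q A) \<in> poly_fun n"

(* (rho, k^m) is a finite-dimensional rational representation of GL_n:
   a group homomorphism GL_n -> GL_m whose matrix entries are regular functions on GL_n,
   i.e. polynomials in the entries of g divided by a power of det g *)
definition rational_rep :: "nat \<Rightarrow> nat \<Rightarrow> ('k::field mat \<Rightarrow> 'k mat) \<Rightarrow> bool" where
  "rational_rep n m \<rho> \<longleftrightarrow>
     (\<forall>g \<in> GL n. \<rho> g \<in> GL m) \<and>
     \<rho> (1\<^sub>m n) = 1\<^sub>m m \<and>
     (\<forall>g \<in> GL n. \<forall>h \<in> GL n. \<rho> (g * h) = \<rho> g * \<rho> h) \<and>
     (\<exists>d::nat. \<forall>a < m. \<forall>b < m. \<exists>p \<in> poly_fun n.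
        \<forall>g \<in> GL n. \<rho> g $$ (a,b) = p g / det g ^ d)"

(* differential d rho : gl_n -> gl(k^m), X \<mapsto> d/dt|_{t=0} rho(1 + tX), computed
   algebraically: t \<mapsto> rho(1 + tX)_{ab} is a rational function q/r of t (r(0) \<noteq> 0),
   and its derivative at 0 is (q'(0) r(0) - q(0) r'(0)) / r(0)^2. *)
definition d_rep :: "nat \<Rightarrow> nat \<Rightarrow> ('k::field mat \<Rightarrow> 'k mat) \<Rightarrow> 'k mat \<Rightarrow> 'k mat" where
  "d_rep n m \<rho> X = mat m m (\<lambda>(a,b). THE D. \<exists>q r :: 'k poly. poly r 0 \<noteq> 0 \<and>
      (\<forall>t. invertible_mat (1\<^sub>m n + t \<cdot>\<^sub>m X) \<and> poly r t \<noteq> 0 \<longrightarrow>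
            \<rho> (1\<^sub>m n + t \<cdot>\<^sub>m X) $$ (a,b) = poly q t / poly r t) \<and>
      D = (coeff q 1 * coeff r 0 - coeff q 0 * coeff r 1) / (coeff r 0)^2)"

(* orbit of (X,w) in gl_n x k^m under the semidirect product G \<ltimes>_rho M, acting by
   Ad(g,v)(X,w) = (Ad(g)X, - d rho(Ad(g)X) v + rho(g) w), Ad(g)X = g X g^{-1} *)
definition semidirect_orbit :: "nat \<Rightarrow> nat \<Rightarrow> ('k::field mat \<Rightarrow> 'k mat) \<Rightarrow> 'k mat \<times> 'k vec \<Rightarrow> ('k mat \<times> 'k vec) set" where
  "semidirect_orbit n m \<rho> Xw = {(Y, - (d_rep n m \<rho> Y *\<^sub>v v) + \<rho> g *\<^sub>v snd Xw) | g v Y.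
      g \<in> GL n \<and> v \<in> carrier_vec m \<and> Y \<in> carrier_mat n n \<and> Y * g = g * fst Xw}"

definition nilcone :: "nat \<Rightarrow> 'k::field mat set" where
  "nilcone n = {X \<in> carrier_mat n n. \<exists>k. X ^\<^sub>m k = 0\<^sub>m n n}"

definition partitions :: "nat \<Rightarrow> nat list set" where
  "partitions n = {ps. sorted_wrt (\<ge>) ps \<and> (\<forall>x \<in> set ps. 0 < x) \<and> sum_list ps = n}"

definition J_mat :: "nat list \<Rightarrow> 'k::field mat" where
  "J_mat ps = jordan_matrix (map (\<lambda>k. (k, 0)) ps)"

definition centralizer :: "nat \<Rightarrow> 'k::field mat \<Rightarrow> 'k mat set" where
  "centralizer n J = {g \<in> GL n. g * J = J * g}"

definition JM :: "nat \<Rightarrow> nat \<Rightarrow> ('k::field mat \<Rightarrow> 'k mat) \<Rightarrow> 'k mat \<Rightarrow> 'k vec set" where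
  "JM n m \<rho> J = {d_rep n m \<rho> J *\<^sub>v v | v. v \<in> carrier_vec m}"

definition quot_orbits :: "nat \<Rightarrow> nat \<Rightarrow> ('k::field mat \<Rightarrow> 'k mat) \<Rightarrow> 'k mat \<Rightarrow> 'k vec set set set" where
  "quot_orbits n m \<rho> J =
     (let cosets = (\<lambda>w. (\<lambda>u. w + u) ` JM n m \<rho> J) ` carrier_vec m
      in (\<lambda>C. (\<lambda>g. (\<lambda>x. \<rho> g *\<^sub>v x) ` C) ` centralizer n J) ` cosets)"

end

theory Submission
  imports Defs "Jordan_Normal_Form.Jordan_Normal_Form_Existence"
begin


definition minv :: "'k::field mat \<Rightarrow> 'k mat" where
  "minv A = (1 / det A) \<cdot>\<^sub>m adj_mat A"

lemma minv_carrier: "A \<in> carrier_mat n n \<Longrightarrow> minv A \<in> carrier_mat n n"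
  unfolding minv_def using adj_mat(1) smult_carrier_mat by blast

lemma minv_right: assumes A: "A \<in> carrier_mat n n" and d: "det A \<noteq> 0"
  shows "A * minv A = 1\<^sub>m n"
proof -
  have "A * minv A = (1 / det A) \<cdot>\<^sub>m (A * adj_mat A)"
    unfolding minv_def using mult_smult_distrib[OF A adj_mat(1)[OF A]] .
  also have "\<dots> = 1\<^sub>m n" using adj_mat(2)[OF A] d by (auto intro!: eq_matI)
  finally show ?thesis .
qed

lemma minv_left: assumes A: "A \<in> carrier_mat n n" and d: "det A \<noteq> 0"
  shows "minv A * A = 1\<^sub>m n"
proof -
  have "minv A * A = (1 / det A) \<cdot>\<^sub>m (adj_mat A * A)"
    unfolding minv_def using mult_smult_assoc_mat[OF adj_mat(1)[OF A] A] .
  also have "\<dots> = 1\<^sub>m n" using adj_mat(3)[OF A] d by (auto intro!: eq_matI)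
  finally show ?thesis .
qed

lemma invertible_iff_det: assumes A: "(A::'k::field mat) \<in> carrier_mat n n"
  shows "invertible_mat A \<longleftrightarrow> det A \<noteq> 0"
proof
  assume "invertible_mat A"
  then obtain B where AB: "A * B = 1\<^sub>m n" and BA: "B * A = 1\<^sub>m (dim_row B)"
    using A unfolding invertible_mat_def inverts_mat_def by auto
  have "dim_col B = n" using AB by (metis index_mult_mat(3) index_one_mat(3))
  moreover have "dim_row B = n" using BA A by (metis carrier_matD(2) index_mult_mat(3) index_one_mat(3))
  ultimately have B: "B \<in> carrier_mat n n" by auto
  have "det A * det B = 1" using det_mult[OF A B] AB by simp
  thus "det A \<noteq> 0" by auto
next
  assume d: "det A \<noteq> 0"
  show "invertible_mat A" unfolding invertible_mat_def inverts_mat_def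
    using A minv_right[OF A d] minv_left[OF A d] minv_carrier[OF A]
    by (intro conjI exI[of _ "minv A"]) auto
qed

lemma GL_iff: "A \<in> GL n \<longleftrightarrow> A \<in> carrier_mat n n \<and> det A \<noteq> 0"
  unfolding GL_def using invertible_iff_det by blast

lemma GL_carrier: "A \<in> GL n \<Longrightarrow> A \<in> carrier_mat n n" unfolding GL_iff by auto

lemma GL_one: "1\<^sub>m n \<in> GL n" unfolding GL_iff by auto

lemma GL_mult: "A \<in> GL n \<Longrightarrow> B \<in> GL n \<Longrightarrow> A * B \<in> GL n"
  unfolding GL_iff using det_mult[of A n B] mult_carrier_mat[of A n n B n] by auto

lemma GL_minv: "A \<in> GL n \<Longrightarrow> minv A \<in> GL n"
proof -
  assume "A \<in> GL n"
  hence A: "A \<in> carrier_mat n n" "det A \<noteq> 0" unfolding GL_iff by auto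
  have "det A * det (minv A) = 1" using det_mult[OF A(1) minv_carrier[OF A(1)]] minv_right[OF A] by simp
  thus ?thesis unfolding GL_iff using minv_carrier[OF A(1)] by auto
qed

lemma GL_minv_right: "A \<in> GL n \<Longrightarrow> A * minv A = 1\<^sub>m n"
  using minv_right unfolding GL_iff by blast
lemma GL_minv_left: "A \<in> GL n \<Longrightarrow> minv A * A = 1\<^sub>m n"
  using minv_left unfolding GL_iff by blast

lemma rep_GL: "rational_rep n m \<rho> \<Longrightarrow> g \<in> GL n \<Longrightarrow> \<rho> g \<in> GL m"
  unfolding rational_rep_def by auto
lemma rep_carrier: "rational_rep n m \<rho> \<Longrightarrow> g \<in> GL n \<Longrightarrow> \<rho> g \<in> carrier_mat m m"
  using rep_GL GL_carrier by blast
lemma rep_one: "rational_rep n m \<rho> \<Longrightarrow> \<rho> (1\<^sub>m n) = 1\<^sub>m m"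
  unfolding rational_rep_def by auto
lemma rep_mult: "rational_rep n m \<rho> \<Longrightarrow> g \<in> GL n \<Longrightarrow> h \<in> GL n \<Longrightarrow> \<rho> (g * h) = \<rho> g * \<rho> h"
  unfolding rational_rep_def by auto
lemma rep_minv_right: "rational_rep n m \<rho> \<Longrightarrow> g \<in> GL n \<Longrightarrow> \<rho> g * \<rho> (minv g) = 1\<^sub>m m"
  using rep_mult[of n m \<rho> g "minv g"] GL_minv GL_minv_right rep_one by metis
lemma rep_minv_left: "rational_rep n m \<rho> \<Longrightarrow> g \<in> GL n \<Longrightarrow> \<rho> (minv g) * \<rho> g = 1\<^sub>m m"
  using rep_mult[of n m \<rho> "minv g" g] GL_minv GL_minv_left rep_one by metis

lemma alg_closed_infinite: assumes "alg_closed TYPE('k::field)"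
  shows "infinite (UNIV :: 'k set)"
proof
  assume fin: "finite (UNIV :: 'k set)"
  define p :: "'k poly" where "p = (\<Prod>a\<in>UNIV. [:-a, 1:]) + 1"
  have deg1: "degree (\<Prod>a\<in>(UNIV::'k set). [:-a, 1:]) = card (UNIV :: 'k set)"
    by (subst degree_prod_eq_sum_degree) auto
  have "card (UNIV :: 'k set) > 0" using fin by (simp add: finite_UNIV_card_ge_0)
  hence "degree p > 0" unfolding p_def using deg1
    by (metis degree_add_eq_left degree_1)
  then obtain x where "poly p x = 0" using assms unfolding alg_closed_def by blast
  moreover have "poly (\<Prod>a\<in>(UNIV::'k set). [:-a, 1:]) x = 0"
    unfolding poly_prod using fin by (intro prod_zero) auto
  ultimately show False unfolding p_def by simp
qed


definition polyfun :: "('k::field \<Rightarrow> 'k) \<Rightarrow> bool" where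
  "polyfun f \<longleftrightarrow> (\<exists>q. \<forall>t. f t = poly q t)"

lemma polyfun_const: "polyfun (\<lambda>t. c)"
  unfolding polyfun_def by (intro exI[of _ "[:c:]"]) simp

lemma polyfun_id: "polyfun (\<lambda>t. t)"
  unfolding polyfun_def by (intro exI[of _ "[:0,1:]"]) simp

lemma polyfun_add: "polyfun f \<Longrightarrow> polyfun g \<Longrightarrow> polyfun (\<lambda>t. f t + g t)"
  unfolding polyfun_def by (metis poly_add)

lemma polyfun_mult: "polyfun f \<Longrightarrow> polyfun g \<Longrightarrow> polyfun (\<lambda>t. f t * g t)"
  unfolding polyfun_def by (metis poly_mult)

lemma polyfun_sum: "finite S \<Longrightarrow> (\<And>i. i \<in> S \<Longrightarrow> polyfun (f i)) \<Longrightarrow> polyfun (\<lambda>t. \<Sum>i\<in>S. f i t)"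
proof (induction S rule: finite_induct)
  case empty then show ?case using polyfun_const[of 0] by simp
next
  case (insert x F)
  then show ?case using polyfun_add[of "f x" "\<lambda>t. \<Sum>i\<in>F. f i t"] by simp
qed

lemma polyfun_prod: "finite S \<Longrightarrow> (\<And>i. i \<in> S \<Longrightarrow> polyfun (f i)) \<Longrightarrow> polyfun (\<lambda>t. \<Prod>i\<in>S. f i t)"
proof (induction S rule: finite_induct)
  case empty then show ?case using polyfun_const[of 1] by simp
next
  case (insert x F)
  then show ?case using polyfun_mult[of "f x" "\<lambda>t. \<Prod>i\<in>F. f i t"] by simp
qed

lemma polyfun_entry: assumes X: "X \<in> carrier_mat n n" and ij: "i < n" "j < n"
  shows "polyfun (\<lambda>t. (1\<^sub>m n + t \<cdot>\<^sub>m X) $$ (i,j))"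
proof -
  have "(\<lambda>t. (1\<^sub>m n + t \<cdot>\<^sub>m X) $$ (i,j)) = (\<lambda>t. (if i = j then 1 else 0) + t * X $$ (i,j))"
    using X ij by auto
  show ?thesis unfolding \<open>(\<lambda>t. (1\<^sub>m n + t \<cdot>\<^sub>m X) $$ (i,j)) = _\<close>
    by (rule polyfun_add[OF polyfun_const polyfun_mult[OF polyfun_id polyfun_const]])
qed

lemma polyfun_poly_fun: assumes p: "p \<in> poly_fun n" and X: "X \<in> carrier_mat n n"
  shows "polyfun (\<lambda>t. p (1\<^sub>m n + t \<cdot>\<^sub>m X))"
  using p
proof (induction rule: poly_fun.induct)
  case (const c) then show ?case by (rule polyfun_const)
next
  case (coord i j) then show ?case using polyfun_entry[OF X] by simp
next
  case (add p q) then show ?case using polyfun_add by blast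
next
  case (mult p q) then show ?case using polyfun_mult by blast
qed

lemma polyfun_det: assumes X: "X \<in> carrier_mat n n"
  shows "polyfun (\<lambda>t. det (1\<^sub>m n + t \<cdot>\<^sub>m X))"
proof -
  have eq: "(\<lambda>t. det (1\<^sub>m n + t \<cdot>\<^sub>m X)) = (\<lambda>t. \<Sum> p \<in> {p. p permutes {0 ..< n}}.
     signof p * (\<Prod> i = 0 ..< n. (1\<^sub>m n + t \<cdot>\<^sub>m X) $$ (i, p i)))"
    using X by (auto simp: det_def)
  show ?thesis unfolding eq
  proof (rule polyfun_sum)
    show "finite {p. p permutes {0..<n}}" by (rule finite_permutations) simp
  next
    fix p assume "p \<in> {p. p permutes {0..<n}}"
    hence p: "p permutes {0..<n}" by simp
    show "polyfun (\<lambda>t. signof p * (\<Prod>i = 0..<n. (1\<^sub>m n + t \<cdot>\<^sub>m X) $$ (i, p i)))"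
    proof (rule polyfun_mult[OF polyfun_const], rule polyfun_prod)
      fix i assume "i \<in> {0..<n}"
      hence "i < n" "p i < n" using permutes_in_image[OF p] by auto
      thus "polyfun (\<lambda>t. (1\<^sub>m n + t \<cdot>\<^sub>m X) $$ (i, p i))" using polyfun_entry[OF X] by blast
    qed simp
  qed
qed

lemma det_one_plus_0: "X \<in> carrier_mat n n \<Longrightarrow> det (1\<^sub>m n + 0 \<cdot>\<^sub>m X) = 1"
proof -
  assume X: "X \<in> carrier_mat n n"
  have "1\<^sub>m n + 0 \<cdot>\<^sub>m X = 1\<^sub>m n" using X by (auto intro!: eq_matI)
  thus ?thesis by simp
qed

lemma finite_noninv: assumes X: "(X::'k::field mat) \<in> carrier_mat n n"
  shows "finite {t. \<not> invertible_mat (1\<^sub>m n + t \<cdot>\<^sub>m X)}"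
proof -
  obtain dq where dq: "\<And>t. det (1\<^sub>m n + t \<cdot>\<^sub>m X) = poly dq t"
    using polyfun_det[OF X] unfolding polyfun_def by blast
  have "poly dq 0 = 1" using dq[of 0] det_one_plus_0[OF X] by simp
  hence "dq \<noteq> 0" by auto
  hence fin: "finite {t. poly dq t = 0}" by (rule poly_roots_finite)
  have "{t. \<not> invertible_mat (1\<^sub>m n + t \<cdot>\<^sub>m X)} \<subseteq> {t. poly dq t = 0}"
  proof
    fix t assume "t \<in> {t. \<not> invertible_mat (1\<^sub>m n + t \<cdot>\<^sub>m X)}"
    moreover have "1\<^sub>m n + t \<cdot>\<^sub>m X \<in> carrier_mat n n" using X by simp
    ultimately have "det (1\<^sub>m n + t \<cdot>\<^sub>m X) = 0" using invertible_iff_det by blast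
    thus "t \<in> {t. poly dq t = 0}" using dq by simp
  qed
  thus ?thesis using fin finite_subset by blast
qed

lemma poly_eq_on_infinite: assumes "infinite S" "\<And>t. t \<in> S \<Longrightarrow> poly p t = poly (q::'k::field poly) t"
  shows "p = q"
proof (rule ccontr)
  assume "p \<noteq> q"
  hence "p - q \<noteq> 0" by simp
  hence "finite {t. poly (p - q) t = 0}" by (rule poly_roots_finite)
  moreover have "S \<subseteq> {t. poly (p - q) t = 0}" using assms(2) by auto
  ultimately show False using assms(1) finite_subset by blast
qed

definition dform :: "'k::field poly \<Rightarrow> 'k poly \<Rightarrow> 'k" where
  "dform q r = (coeff q 1 * coeff r 0 - coeff q 0 * coeff r 1) / (coeff r 0)^2"

lemma coeff_mult_0: "coeff (p * q) 0 = coeff p 0 * coeff q 0"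
  by (simp add: coeff_mult)
lemma coeff_mult_1: "coeff (p * q) (Suc 0) = coeff p 0 * coeff q (Suc 0) + coeff p (Suc 0) * coeff q 0"
  by (simp add: coeff_mult)

lemma dform_alg1: fixes q0 q1 r0 r1 Q0 Q1 R0 R1 :: "'k::field"
 assumes e0: "q0 * R0 = Q0 * r0" and e1: "q0 * R1 + q1 * R0 = Q0 * r1 + Q1 * r0"
 shows "(Q1 * R0 - Q0 * R1) * r0^2 = (q1 * r0 - q0 * r1) * R0^2"
proof -
  have a: "Q1 * r0 = q0*R1 + q1*R0 - Q0*r1" using e1 by (simp add: algebra_simps)
  have "(Q1*R0 - Q0*R1)*r0^2 = R0*r0*(Q1*r0) - R1*r0*(Q0*r0)" by (simp add: power2_eq_square algebra_simps)
  also have "\<dots> = R0*r0*(q0*R1 + q1*R0 - Q0*r1) - R1*r0*(q0*R0)" using a e0 by simp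
  also have "\<dots> = R0*R0*r0*q1 - R0*r1*(Q0*r0)" by (simp add: algebra_simps)
  also have "\<dots> = R0*R0*r0*q1 - R0*r1*(q0*R0)" using e0 by simp
  also have "\<dots> = (q1*r0 - q0*r1)*R0^2" by (simp add: power2_eq_square algebra_simps)
  finally show ?thesis .
qed
lemma dform_alg2: fixes q0 q1 r0 r1 Q0 Q1 R0 R1 :: "'k::field"
 assumes "(Q1 * R0 - Q0 * R1) * r0^2 = (q1 * r0 - q0 * r1) * R0^2" "r0 \<noteq> 0" "R0 \<noteq> 0"
 shows "(q1 * r0 - q0 * r1) / r0^2 = (Q1 * R0 - Q0 * R1) / R0^2"
  using assms by (simp add: frac_eq_eq)

lemma dform_cross: assumes "q * r' = q' * r" "coeff r 0 \<noteq> 0" "coeff r' 0 \<noteq> 0"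
  shows "dform q r = dform q' r'"
proof -
  have e0: "coeff q 0 * coeff r' 0 = coeff q' 0 * coeff r 0"
    using arg_cong[OF assms(1), of "\<lambda>p. coeff p 0"] unfolding coeff_mult_0 .
  have e1: "coeff q 0 * coeff r' 1 + coeff q 1 * coeff r' 0 = coeff q' 0 * coeff r 1 + coeff q' 1 * coeff r 0"
    using arg_cong[OF assms(1), of "\<lambda>p. coeff p (Suc 0)"] unfolding coeff_mult_1 by simp
  show ?thesis unfolding dform_def
    by (rule dform_alg2[OF dform_alg1[OF e0 e1] assms(2,3)])
qed

lemma d_rep_eq:
  fixes \<rho> :: "'k::field mat \<Rightarrow> 'k mat"
  assumes inf: "infinite (UNIV :: 'k set)" and X: "X \<in> carrier_mat n n" and ab: "a < m" "b < m"
    and r0: "poly r 0 \<noteq> 0"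
    and H: "\<And>t. invertible_mat (1\<^sub>m n + t \<cdot>\<^sub>m X) \<Longrightarrow> poly r t \<noteq> 0 \<Longrightarrow>
        \<rho> (1\<^sub>m n + t \<cdot>\<^sub>m X) $$ (a,b) = poly q t / poly r t"
  shows "d_rep n m \<rho> X $$ (a,b) = dform q r"
proof -
  have "(THE D. \<exists>q r :: 'k poly. poly r 0 \<noteq> 0 \<and>
      (\<forall>t. invertible_mat (1\<^sub>m n + t \<cdot>\<^sub>m X) \<and> poly r t \<noteq> 0 \<longrightarrow>
            \<rho> (1\<^sub>m n + t \<cdot>\<^sub>m X) $$ (a,b) = poly q t / poly r t) \<and>
      D = (coeff q 1 * coeff r 0 - coeff q 0 * coeff r 1) / (coeff r 0)^2) = dform q r"
  proof (rule the_equality)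
    show "\<exists>q' r' :: 'k poly. poly r' 0 \<noteq> 0 \<and>
      (\<forall>t. invertible_mat (1\<^sub>m n + t \<cdot>\<^sub>m X) \<and> poly r' t \<noteq> 0 \<longrightarrow>
            \<rho> (1\<^sub>m n + t \<cdot>\<^sub>m X) $$ (a,b) = poly q' t / poly r' t) \<and>
      dform q r = (coeff q' 1 * coeff r' 0 - coeff q' 0 * coeff r' 1) / (coeff r' 0)^2"
      using r0 H unfolding dform_def by blast
  next
    fix D assume "\<exists>q' r' :: 'k poly. poly r' 0 \<noteq> 0 \<and>
      (\<forall>t. invertible_mat (1\<^sub>m n + t \<cdot>\<^sub>m X) \<and> poly r' t \<noteq> 0 \<longrightarrow>
            \<rho> (1\<^sub>m n + t \<cdot>\<^sub>m X) $$ (a,b) = poly q' t / poly r' t) \<and>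
      D = (coeff q' 1 * coeff r' 0 - coeff q' 0 * coeff r' 1) / (coeff r' 0)^2"
    then obtain q' r' :: "'k poly" where r0': "poly r' 0 \<noteq> 0"
      and H': "\<And>t. invertible_mat (1\<^sub>m n + t \<cdot>\<^sub>m X) \<Longrightarrow> poly r' t \<noteq> 0 \<Longrightarrow>
            \<rho> (1\<^sub>m n + t \<cdot>\<^sub>m X) $$ (a,b) = poly q' t / poly r' t"
      and D: "D = dform q' r'" unfolding dform_def by blast
    have rne: "r \<noteq> 0" "r' \<noteq> 0" using r0 r0' by auto
    define S where "S = UNIV - ({t. \<not> invertible_mat (1\<^sub>m n + t \<cdot>\<^sub>m X)} \<union> {t. poly r t = 0} \<union> {t. poly r' t = 0})"
    have "finite ({t. \<not> invertible_mat (1\<^sub>m n + t \<cdot>\<^sub>m X)} \<union> {t. poly r t = 0} \<union> {t. poly r' t = 0})"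
      using finite_noninv[OF X] poly_roots_finite[OF rne(1)] poly_roots_finite[OF rne(2)] by blast
    hence infS: "infinite S" unfolding S_def using inf by (metis Diff_infinite_finite)
    have "q * r' = q' * r"
    proof (rule poly_eq_on_infinite[OF infS])
      fix t assume "t \<in> S"
      hence t: "invertible_mat (1\<^sub>m n + t \<cdot>\<^sub>m X)" "poly r t \<noteq> 0" "poly r' t \<noteq> 0" unfolding S_def by auto
      have "poly q t / poly r t = poly q' t / poly r' t" using H[OF t(1,2)] H'[OF t(1,3)] by simp
      thus "poly (q * r') t = poly (q' * r) t" using t(2,3) by (simp add: field_simps)
    qed
    thus "D = dform q r" unfolding D using dform_cross[of q r' q' r] r0 r0'
      by (simp add: poly_0_coeff_0)
  qed
  thus ?thesis unfolding d_rep_def by (simp only: index_mat(1)[OF ab] prod.case)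
qed


lemma dform_smult: "dform (Polynomial.smult c q) r = c * dform q r"
  unfolding dform_def by (cases "coeff r 0 = 0") (simp_all add: field_simps)

lemma dform_add: "dform (p + q) r = dform p r + dform q r"
  unfolding dform_def by (cases "coeff r 0 = 0") (simp_all add: field_simps)

lemma dform_sum: "finite S \<Longrightarrow> dform (\<Sum>i\<in>S. f i) r = (\<Sum>i\<in>S. dform (f i) r)"
proof (induction S rule: finite_induct)
  case empty then show ?case unfolding dform_def by simp
next
  case (insert x F) then show ?case by (simp add: dform_add)
qed

lemma triple_entry: assumes A: "A \<in> carrier_mat m m" and B: "B \<in> carrier_mat m m" and C: "C \<in> carrier_mat m m"
  and ab: "a < m" "b < m"
  shows "(A * B * C) $$ (a,b) = (\<Sum>j\<in>{0..<m}. (\<Sum>i\<in>{0..<m}. A $$ (a,i) * B $$ (i,j)) * C $$ (j,b))"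
  using A B C ab by (simp add: scalar_prod_def del: assoc_mult_mat)

lemma conj_one_plus: assumes g: "g \<in> GL n" and X: "X \<in> carrier_mat n n"
  shows "g * (1\<^sub>m n + t \<cdot>\<^sub>m X) * minv g = 1\<^sub>m n + t \<cdot>\<^sub>m (g * X * minv g)"
proof -
  have gc: "g \<in> carrier_mat n n" and gi: "minv g \<in> carrier_mat n n" using g GL_carrier GL_minv by auto
  have "g * (1\<^sub>m n + t \<cdot>\<^sub>m X) = g * 1\<^sub>m n + g * (t \<cdot>\<^sub>m X)"
    by (rule mult_add_distrib_mat[OF gc]) (use X in auto)
  also have "\<dots> = g + t \<cdot>\<^sub>m (g * X)" using gc mult_smult_distrib[OF gc X] by simp
  finally have "g * (1\<^sub>m n + t \<cdot>\<^sub>m X) * minv g = (g + t \<cdot>\<^sub>m (g * X)) * minv g" by simp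
  also have "\<dots> = g * minv g + (t \<cdot>\<^sub>m (g * X)) * minv g"
    by (rule add_mult_distrib_mat[OF gc _ gi]) (use gc X in auto)
  also have "\<dots> = g * minv g + t \<cdot>\<^sub>m (g * X * minv g)"
    using mult_smult_assoc_mat[OF mult_carrier_mat[OF gc X] gi] by simp
  also have "\<dots> = 1\<^sub>m n + t \<cdot>\<^sub>m (g * X * minv g)" using GL_minv_right[OF g] by simp
  finally show ?thesis .
qed

lemma det_conj: assumes g: "g \<in> GL n" and A: "A \<in> carrier_mat n n"
  shows "det (g * A * minv g) = det A"
proof -
  have gc: "g \<in> carrier_mat n n" and gi: "minv g \<in> carrier_mat n n" using g GL_carrier GL_minv by auto
  have "det (g * A * minv g) = det g * det A * det (minv g)"
    using det_mult[OF mult_carrier_mat[OF gc A] gi] det_mult[OF gc A] by simp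
  also have "\<dots> = det A * det (g * minv g)" using det_mult[OF gc gi] by simp
  also have "\<dots> = det A" using GL_minv_right[OF g] by simp
  finally show ?thesis .
qed

lemma rep_data: assumes "rational_rep n m \<rho>"
  shows "\<exists>P d. \<forall>a < m. \<forall>b < m. P a b \<in> poly_fun n \<and> (\<forall>h \<in> GL n. \<rho> h $$ (a,b) = P a b h / det h ^ d)"
proof -
  from assms obtain d where "\<forall>a < m. \<forall>b < m. \<exists>p \<in> poly_fun n. \<forall>g \<in> GL n. \<rho> g $$ (a,b) = p g / det g ^ d"
    unfolding rational_rep_def by blast
  then obtain P where PP: "\<And>a b. a < m \<Longrightarrow> b < m \<Longrightarrow> P a b \<in> poly_fun n \<and> (\<forall>g \<in> GL n. \<rho> g $$ (a,b) = P a b g / det g ^ d)"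
    by metis
  thus ?thesis by blast
qed

lemma d_rep_equivariant:
  fixes \<rho> :: "'k::field mat \<Rightarrow> 'k mat"
  assumes inf: "infinite (UNIV :: 'k set)" and rr: "rational_rep n m \<rho>"
    and g: "g \<in> GL n" and X: "X \<in> carrier_mat n n"
  shows "d_rep n m \<rho> (g * X * minv g) = \<rho> g * d_rep n m \<rho> X * \<rho> (minv g)"
proof -
  obtain P d where PP: "\<forall>a < m. \<forall>b < m. P a b \<in> poly_fun n \<and> (\<forall>h \<in> GL n. \<rho> h $$ (a,b) = P a b h / det h ^ d)"
    using rep_data[OF rr] by blast
  have P: "\<And>a b. a < m \<Longrightarrow> b < m \<Longrightarrow> P a b \<in> poly_fun n" using PP by blast
  have Prep: "\<And>a b h. a < m \<Longrightarrow> b < m \<Longrightarrow> h \<in> GL n \<Longrightarrow> \<rho> h $$ (a,b) = P a b h / det h ^ d"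
    using PP by blast
  have gc: "g \<in> carrier_mat n n" and gi: "minv g \<in> GL n" and gic: "minv g \<in> carrier_mat n n"
    using g GL_carrier GL_minv by auto
  define Z where "Z = g * X * minv g"
  have Z: "Z \<in> carrier_mat n n" unfolding Z_def using gc X gic by auto
  obtain dq where dq: "\<And>t. det (1\<^sub>m n + t \<cdot>\<^sub>m X) = poly dq t"
    using polyfun_det[OF X] unfolding polyfun_def by blast
  define R where "R = dq ^ d"
  have R: "\<And>t. poly R t = det (1\<^sub>m n + t \<cdot>\<^sub>m X) ^ d" unfolding R_def by (simp add: dq poly_power)
  have R0: "poly R 0 \<noteq> 0" using R[of 0] det_one_plus_0[OF X] by simp
  define Q where "Q = (\<lambda>a b. SOME q. \<forall>t. P a b (1\<^sub>m n + t \<cdot>\<^sub>m X) = poly q t)"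
  have Q: "\<forall>t. P a b (1\<^sub>m n + t \<cdot>\<^sub>m X) = poly (Q a b) t" if "a < m" "b < m" for a b
  proof -
    have "\<exists>q. \<forall>t. P a b (1\<^sub>m n + t \<cdot>\<^sub>m X) = poly q t"
      using polyfun_poly_fun[OF P[OF that] X] unfolding polyfun_def .
    thus ?thesis unfolding Q_def by (rule someI_ex)
  qed
  have rhoX: "\<rho> (1\<^sub>m n + t \<cdot>\<^sub>m X) $$ (i,j) = poly (Q i j) t / poly R t"
    if "invertible_mat (1\<^sub>m n + t \<cdot>\<^sub>m X)" "i < m" "j < m" for t i j
  proof -
    have "1\<^sub>m n + t \<cdot>\<^sub>m X \<in> GL n" unfolding GL_def using that X by simp
    thus ?thesis using Prep[OF that(2,3)] Q[OF that(2,3)] R by simp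
  qed
  have dX: "d_rep n m \<rho> X $$ (i,j) = dform (Q i j) R" if "i < m" "j < m" for i j
    by (rule d_rep_eq[OF inf X that R0]) (use rhoX that in auto)
  define C where "C = (\<lambda>a b i j. \<rho> g $$ (a,i) * \<rho> (minv g) $$ (j,b))"
  define Q' where "Q' = (\<lambda>a b. \<Sum>j\<in>{0..<m}. \<Sum>i\<in>{0..<m}. Polynomial.smult (C a b i j) (Q i j))"
  have rg: "\<rho> g \<in> carrier_mat m m" "\<rho> (minv g) \<in> carrier_mat m m"
    using rep_carrier[OF rr] g gi by auto
  have dZ: "d_rep n m \<rho> Z $$ (a,b) = dform (Q' a b) R" if ab: "a < m" "b < m" for a b
  proof (rule d_rep_eq[OF inf Z ab R0])
    fix t assume invZ: "invertible_mat (1\<^sub>m n + t \<cdot>\<^sub>m Z)" and Rt: "poly R t \<noteq> 0"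
    have eqZ: "1\<^sub>m n + t \<cdot>\<^sub>m Z = g * (1\<^sub>m n + t \<cdot>\<^sub>m X) * minv g"
      unfolding Z_def using conj_one_plus[OF g X] by simp
    have cX: "1\<^sub>m n + t \<cdot>\<^sub>m X \<in> carrier_mat n n" using X by simp
    have cZ: "1\<^sub>m n + t \<cdot>\<^sub>m Z \<in> carrier_mat n n" using Z by simp
    have "det (1\<^sub>m n + t \<cdot>\<^sub>m Z) \<noteq> 0" using invZ invertible_iff_det[OF cZ] by simp
    hence "det (1\<^sub>m n + t \<cdot>\<^sub>m X) \<noteq> 0" unfolding eqZ det_conj[OF g cX] .
    hence inv1: "1\<^sub>m n + t \<cdot>\<^sub>m X \<in> GL n" unfolding GL_iff using X by simp
    hence inv1': "invertible_mat (1\<^sub>m n + t \<cdot>\<^sub>m X)" unfolding GL_def by simp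
    have "\<rho> (1\<^sub>m n + t \<cdot>\<^sub>m Z) = \<rho> g * \<rho> (1\<^sub>m n + t \<cdot>\<^sub>m X) * \<rho> (minv g)"
      unfolding eqZ using rep_mult[OF rr] g gi inv1 GL_mult by metis
    hence "\<rho> (1\<^sub>m n + t \<cdot>\<^sub>m Z) $$ (a,b) =
       (\<Sum>j\<in>{0..<m}. (\<Sum>i\<in>{0..<m}. \<rho> g $$ (a,i) * \<rho> (1\<^sub>m n + t \<cdot>\<^sub>m X) $$ (i,j)) * \<rho> (minv g) $$ (j,b))"
      using triple_entry[OF rg(1) rep_carrier[OF rr inv1] rg(2) ab] by simp
    also have "\<dots> = (\<Sum>j\<in>{0..<m}. (\<Sum>i\<in>{0..<m}. C a b i j * poly (Q i j) t) / poly R t)"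
    proof (intro sum.cong refl)
      fix j assume j: "j \<in> {0..<m}"
      have "(\<Sum>i\<in>{0..<m}. \<rho> g $$ (a,i) * \<rho> (1\<^sub>m n + t \<cdot>\<^sub>m X) $$ (i,j)) * \<rho> (minv g) $$ (j,b)
         = (\<Sum>i\<in>{0..<m}. (C a b i j * poly (Q i j) t) / poly R t)"
        unfolding sum_distrib_right by (intro sum.cong refl) (use j in \<open>simp add: rhoX[OF inv1'] C_def mult_ac\<close>)
      also have "\<dots> = (\<Sum>i\<in>{0..<m}. C a b i j * poly (Q i j) t) / poly R t"
        by (simp add: sum_divide_distrib)
      finally show "(\<Sum>i\<in>{0..<m}. \<rho> g $$ (a,i) * \<rho> (1\<^sub>m n + t \<cdot>\<^sub>m X) $$ (i,j)) * \<rho> (minv g) $$ (j,b)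
         = (\<Sum>i\<in>{0..<m}. C a b i j * poly (Q i j) t) / poly R t" .
    qed
    also have "\<dots> = poly (Q' a b) t / poly R t"
      unfolding Q'_def by (simp add: poly_sum sum_divide_distrib)
    finally show "\<rho> (1\<^sub>m n + t \<cdot>\<^sub>m Z) $$ (a,b) = poly (Q' a b) t / poly R t" .
  qed
  show ?thesis
  proof (rule eq_matI)
    fix a b assume ab: "a < dim_row (\<rho> g * d_rep n m \<rho> X * \<rho> (minv g))" "b < dim_col (\<rho> g * d_rep n m \<rho> X * \<rho> (minv g))"
    hence ab: "a < m" "b < m" using rg by auto
    have dXc: "d_rep n m \<rho> X \<in> carrier_mat m m" unfolding d_rep_def by simp
    have "d_rep n m \<rho> (g * X * minv g) $$ (a,b) = dform (Q' a b) R" using dZ[OF ab] unfolding Z_def .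
    also have "\<dots> = (\<Sum>j\<in>{0..<m}. \<Sum>i\<in>{0..<m}. C a b i j * dform (Q i j) R)"
      unfolding Q'_def by (simp add: dform_sum dform_smult)
    also have "\<dots> = (\<Sum>j\<in>{0..<m}. (\<Sum>i\<in>{0..<m}. \<rho> g $$ (a,i) * d_rep n m \<rho> X $$ (i,j)) * \<rho> (minv g) $$ (j,b))"
    proof (intro sum.cong refl)
      fix j assume j: "j \<in> {0..<m}"
      show "(\<Sum>i\<in>{0..<m}. C a b i j * dform (Q i j) R) = (\<Sum>i\<in>{0..<m}. \<rho> g $$ (a,i) * d_rep n m \<rho> X $$ (i,j)) * \<rho> (minv g) $$ (j,b)"
        unfolding sum_distrib_right by (intro sum.cong refl) (use j in \<open>simp add: dX C_def mult_ac\<close>)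
    qed
    also have "\<dots> = (\<rho> g * d_rep n m \<rho> X * \<rho> (minv g)) $$ (a,b)"
      using triple_entry[OF rg(1) dXc rg(2) ab] by simp
    finally show "d_rep n m \<rho> (g * X * minv g) $$ (a,b) = (\<rho> g * d_rep n m \<rho> X * \<rho> (minv g)) $$ (a,b)" .
  qed (use rg in \<open>auto simp: d_rep_def\<close>)
qed

lemma d_rep_carrier: "d_rep n m \<rho> X \<in> carrier_mat m m"
  unfolding d_rep_def by simp

lemma d_rep_intertwine:
  fixes \<rho> :: "'k::field mat \<Rightarrow> 'k mat"
  assumes inf: "infinite (UNIV :: 'k set)" and rr: "rational_rep n m \<rho>"
    and g: "g \<in> GL n" and X: "X \<in> carrier_mat n n" and Y: "Y \<in> carrier_mat n n"
    and YX: "Y * g = g * X"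
  shows "d_rep n m \<rho> Y * \<rho> g = \<rho> g * d_rep n m \<rho> X"
proof -
  have gc: "g \<in> carrier_mat n n" and gi: "minv g \<in> GL n" and gic: "minv g \<in> carrier_mat n n"
    using g GL_carrier GL_minv by auto
  have "Y = Y * (g * minv g)" using GL_minv_right[OF g] Y by simp
  also have "\<dots> = (Y * g) * minv g" using Y gc gic by simp
  also have "\<dots> = g * X * minv g" using YX by simp
  finally have Yeq: "Y = g * X * minv g" .
  have rg: "\<rho> g \<in> carrier_mat m m" "\<rho> (minv g) \<in> carrier_mat m m"
    using rep_carrier[OF rr] g gi by auto
  have "d_rep n m \<rho> Y * \<rho> g = \<rho> g * d_rep n m \<rho> X * (\<rho> (minv g) * \<rho> g)"
    unfolding Yeq d_rep_equivariant[OF inf rr g X] using rg d_rep_carrier[of n m \<rho> X]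
    by (simp add: mult_carrier_mat assoc_mult_mat[of _ m m _ m _ m])
  also have "\<dots> = \<rho> g * d_rep n m \<rho> X" using rep_minv_left[OF rr g] rg d_rep_carrier[of n m \<rho> X]
    by (simp add: mult_carrier_mat)
  finally show ?thesis .
qed


lemma orb_iff: "(Y, w') \<in> semidirect_orbit n m \<rho> (X, w) \<longleftrightarrow>
  (\<exists>g v. g \<in> GL n \<and> v \<in> carrier_vec m \<and> Y \<in> carrier_mat n n \<and> Y * g = g * X \<and>
     w' = -(d_rep n m \<rho> Y *\<^sub>v v) + \<rho> g *\<^sub>v w)"
  unfolding semidirect_orbit_def by auto

lemma vec_ident1: "(a::'k::field vec) \<in> carrier_vec m \<Longrightarrow> b \<in> carrier_vec m \<Longrightarrow> c \<in> carrier_vec m \<Longrightarrow>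
  -a + (-b + c) = -(a + b) + c"
  by (rule eq_vecI) auto

lemma vec_ident2: "(a::'k::field vec) \<in> carrier_vec m \<Longrightarrow> c \<in> carrier_vec m \<Longrightarrow>
  c = -(-a) + (-a + c)"
  by (rule eq_vecI) auto

lemma mv_uminus: "A \<in> carrier_mat r c \<Longrightarrow> (v::'k::field vec) \<in> carrier_vec c \<Longrightarrow> A *\<^sub>v (-v) = -(A *\<^sub>v v)"
  by (rule eq_vecI) auto

lemma mv_zero: "A \<in> carrier_mat r c \<Longrightarrow> A *\<^sub>v 0\<^sub>v c = (0\<^sub>v r :: 'k::field vec)"
  by (rule eq_vecI) auto

context
  fixes n m :: nat and \<rho> :: "'k::field mat \<Rightarrow> 'k mat"
  assumes inf: "infinite (UNIV :: 'k set)" and rr: "rational_rep n m \<rho>"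
begin

lemma orb_carrier: "(Y, w') \<in> semidirect_orbit n m \<rho> (X, w) \<Longrightarrow> Y \<in> carrier_mat n n \<and> w' \<in> carrier_vec m"
proof -
  assume "(Y, w') \<in> semidirect_orbit n m \<rho> (X, w)"
  then obtain g v where g: "g \<in> GL n" and Y: "Y \<in> carrier_mat n n"
    and w': "w' = -(d_rep n m \<rho> Y *\<^sub>v v) + \<rho> g *\<^sub>v w" unfolding orb_iff by blast
  have "\<rho> g \<in> carrier_mat m m" using rep_carrier[OF rr g] .
  hence "dim_vec w' = m" unfolding w' by simp
  hence "w' \<in> carrier_vec m" by (rule carrier_vecI)
  thus ?thesis using Y by simp
qed

lemma orb_refl: assumes X: "X \<in> carrier_mat n n" and w: "w \<in> carrier_vec m"
  shows "(X, w) \<in> semidirect_orbit n m \<rho> (X, w)"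
  unfolding orb_iff
proof (intro exI conjI)
  show "1\<^sub>m n \<in> GL n" by (rule GL_one)
  show "0\<^sub>v m \<in> carrier_vec m" by simp
  show "X \<in> carrier_mat n n" by fact
  show "X * 1\<^sub>m n = 1\<^sub>m n * X" using X by simp
  have "d_rep n m \<rho> X *\<^sub>v 0\<^sub>v m = 0\<^sub>v m" using mv_zero[OF d_rep_carrier] .
  thus "w = -(d_rep n m \<rho> X *\<^sub>v 0\<^sub>v m) + \<rho> (1\<^sub>m n) *\<^sub>v w"
    using w rep_one[OF rr] by (auto intro!: eq_vecI)
qed

lemma orb_trans: assumes X: "X \<in> carrier_mat n n" and w: "w \<in> carrier_vec m"
  and YX: "(Y, w') \<in> semidirect_orbit n m \<rho> (X, w)" and ZY: "(Z, w'') \<in> semidirect_orbit n m \<rho> (Y, w')"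
  shows "(Z, w'') \<in> semidirect_orbit n m \<rho> (X, w)"
proof -
  from YX obtain g v where g: "g \<in> GL n" and v: "v \<in> carrier_vec m" and Y: "Y \<in> carrier_mat n n"
    and Yg: "Y * g = g * X" and w': "w' = -(d_rep n m \<rho> Y *\<^sub>v v) + \<rho> g *\<^sub>v w" unfolding orb_iff by blast
  from ZY obtain h u where h: "h \<in> GL n" and u: "u \<in> carrier_vec m" and Z: "Z \<in> carrier_mat n n"
    and Zh: "Z * h = h * Y" and w'': "w'' = -(d_rep n m \<rho> Z *\<^sub>v u) + \<rho> h *\<^sub>v w'" unfolding orb_iff by blast
  have gc: "g \<in> carrier_mat n n" and hc: "h \<in> carrier_mat n n" using g h GL_carrier by auto
  have rg: "\<rho> g \<in> carrier_mat m m" and rh: "\<rho> h \<in> carrier_mat m m" using rep_carrier[OF rr] g h by auto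
  have DY: "d_rep n m \<rho> Y \<in> carrier_mat m m" and DZ: "d_rep n m \<rho> Z \<in> carrier_mat m m" by (rule d_rep_carrier)+
  have int: "d_rep n m \<rho> Z * \<rho> h = \<rho> h * d_rep n m \<rho> Y" by (rule d_rep_intertwine[OF inf rr h Y Z Zh])
  have "Z * (h * g) = (Z * h) * g" using Z hc gc by simp
  also have "\<dots> = h * (Y * g)" unfolding Zh using hc Y gc by simp
  also have "\<dots> = (h * g) * X" unfolding Yg using hc gc X by simp
  finally have Zhg: "Z * (h * g) = (h * g) * X" .
  have e1: "\<rho> h *\<^sub>v w' = -(\<rho> h *\<^sub>v (d_rep n m \<rho> Y *\<^sub>v v)) + \<rho> h *\<^sub>v (\<rho> g *\<^sub>v w)"
    unfolding w' using rh DY v rg w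
    by (simp add: mult_add_distrib_mat_vec[OF rh] mv_uminus[OF rh])
  have e2: "\<rho> h *\<^sub>v (d_rep n m \<rho> Y *\<^sub>v v) = d_rep n m \<rho> Z *\<^sub>v (\<rho> h *\<^sub>v v)"
    using assoc_mult_mat_vec[OF rh DY v] assoc_mult_mat_vec[OF DZ rh v] int by simp
  have e3: "\<rho> h *\<^sub>v (\<rho> g *\<^sub>v w) = \<rho> (h * g) *\<^sub>v w"
    using assoc_mult_mat_vec[OF rh rg w] rep_mult[OF rr h g] by simp
  have e4: "d_rep n m \<rho> Z *\<^sub>v (u + \<rho> h *\<^sub>v v) = d_rep n m \<rho> Z *\<^sub>v u + d_rep n m \<rho> Z *\<^sub>v (\<rho> h *\<^sub>v v)"
    by (rule mult_add_distrib_mat_vec[OF DZ u]) (use rh v in simp)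
  have "w'' = -(d_rep n m \<rho> Z *\<^sub>v (u + \<rho> h *\<^sub>v v)) + \<rho> (h * g) *\<^sub>v w"
    unfolding w'' e1 e2 e3 e4
    by (rule vec_ident1[OF mult_mat_vec_carrier[OF DZ u] mult_mat_vec_carrier[OF DZ mult_mat_vec_carrier[OF rh v]]
          mult_mat_vec_carrier[OF rep_carrier[OF rr GL_mult[OF h g]] w]])
  moreover have "u + \<rho> h *\<^sub>v v \<in> carrier_vec m" using u mult_mat_vec_carrier[OF rh v] by simp
  ultimately show ?thesis unfolding orb_iff
    by (intro exI[of _ "h * g"] exI[of _ "u + \<rho> h *\<^sub>v v"] conjI GL_mult[OF h g] Z Zhg)
qed

lemma orb_sym: assumes X: "X \<in> carrier_mat n n" and w: "w \<in> carrier_vec m"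
  and YX: "(Y, w') \<in> semidirect_orbit n m \<rho> (X, w)"
  shows "(X, w) \<in> semidirect_orbit n m \<rho> (Y, w')"
proof -
  from YX obtain g v where g: "g \<in> GL n" and v: "v \<in> carrier_vec m" and Y: "Y \<in> carrier_mat n n"
    and Yg: "Y * g = g * X" and w': "w' = -(d_rep n m \<rho> Y *\<^sub>v v) + \<rho> g *\<^sub>v w" unfolding orb_iff by blast
  define gi where "gi = minv g"
  have gi: "gi \<in> GL n" unfolding gi_def using GL_minv[OF g] .
  have gc: "g \<in> carrier_mat n n" and gic: "gi \<in> carrier_mat n n" using g gi GL_carrier by auto
  have rg: "\<rho> g \<in> carrier_mat m m" and rgi: "\<rho> gi \<in> carrier_mat m m" using rep_carrier[OF rr] g gi by auto
  have DY: "d_rep n m \<rho> Y \<in> carrier_mat m m" and DX: "d_rep n m \<rho> X \<in> carrier_mat m m" by (rule d_rep_carrier)+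
  have "X * gi = gi * g * X * gi" unfolding gi_def using GL_minv_left[OF g] X by simp
  also have "\<dots> = gi * (Y * g) * gi" unfolding Yg using gic gc X by simp
  also have "\<dots> = gi * Y * (g * gi)" using gic gc Y by (simp add: assoc_mult_mat[of _ n n _ n _ n])
  also have "\<dots> = gi * Y" unfolding gi_def GL_minv_right[OF g] using gic Y by simp
  finally have Xgi: "X * gi = gi * Y" .
  have int: "d_rep n m \<rho> X * \<rho> gi = \<rho> gi * d_rep n m \<rho> Y" by (rule d_rep_intertwine[OF inf rr gi Y X Xgi])
  have e1: "\<rho> gi *\<^sub>v w' = -(\<rho> gi *\<^sub>v (d_rep n m \<rho> Y *\<^sub>v v)) + \<rho> gi *\<^sub>v (\<rho> g *\<^sub>v w)"
    unfolding w' using rgi DY v rg w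
    by (simp add: mult_add_distrib_mat_vec[OF rgi] mv_uminus[OF rgi])
  have e2: "\<rho> gi *\<^sub>v (d_rep n m \<rho> Y *\<^sub>v v) = d_rep n m \<rho> X *\<^sub>v (\<rho> gi *\<^sub>v v)"
    using assoc_mult_mat_vec[OF rgi DY v] assoc_mult_mat_vec[OF DX rgi v] int by simp
  have e3: "\<rho> gi *\<^sub>v (\<rho> g *\<^sub>v w) = w"
    using assoc_mult_mat_vec[OF rgi rg w] rep_minv_left[OF rr g] w unfolding gi_def by simp
  have e4: "d_rep n m \<rho> X *\<^sub>v (-(\<rho> gi *\<^sub>v v)) = -(d_rep n m \<rho> X *\<^sub>v (\<rho> gi *\<^sub>v v))"
    by (rule mv_uminus[OF DX]) (use rgi v in simp)
  have "w = -(d_rep n m \<rho> X *\<^sub>v (-(\<rho> gi *\<^sub>v v))) + \<rho> gi *\<^sub>v w'"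
    unfolding e1 e2 e3 e4 by (rule vec_ident2[OF mult_mat_vec_carrier[OF DX mult_mat_vec_carrier[OF rgi v]] w])
  moreover have "-(\<rho> gi *\<^sub>v v) \<in> carrier_vec m" using rgi v by simp
  ultimately show ?thesis unfolding orb_iff
    by (intro exI[of _ gi] exI[of _ "-(\<rho> gi *\<^sub>v v)"] conjI gi X Xgi)
qed

lemma orb_eq: assumes X: "X \<in> carrier_mat n n" and w: "w \<in> carrier_vec m"
  and YX: "(Y, w') \<in> semidirect_orbit n m \<rho> (X, w)"
  shows "semidirect_orbit n m \<rho> (Y, w') = semidirect_orbit n m \<rho> (X, w)"
proof
  have Y: "Y \<in> carrier_mat n n" and w': "w' \<in> carrier_vec m" using orb_carrier[OF YX] by auto
  show "semidirect_orbit n m \<rho> (Y, w') \<subseteq> semidirect_orbit n m \<rho> (X, w)"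
  proof
    fix p assume "p \<in> semidirect_orbit n m \<rho> (Y, w')"
    then obtain Z w'' where p: "p = (Z, w'')" and "(Z, w'') \<in> semidirect_orbit n m \<rho> (Y, w')" by (cases p) auto
    thus "p \<in> semidirect_orbit n m \<rho> (X, w)" using orb_trans[OF X w YX] by simp
  qed
  show "semidirect_orbit n m \<rho> (X, w) \<subseteq> semidirect_orbit n m \<rho> (Y, w')"
  proof
    fix p assume "p \<in> semidirect_orbit n m \<rho> (X, w)"
    then obtain Z w'' where p: "p = (Z, w'')" and "(Z, w'') \<in> semidirect_orbit n m \<rho> (X, w)" by (cases p) auto
    thus "p \<in> semidirect_orbit n m \<rho> (Y, w')" using orb_trans[OF Y w' orb_sym[OF X w YX]] by simp
  qed
qed

end


lemma mv_unit_index: "(A::'k::field mat) \<in> carrier_mat r c \<Longrightarrow> j < c \<Longrightarrow> i < r \<Longrightarrow> (A *\<^sub>v unit_vec c j) $ i = A $$ (i,j)"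
  by simp

lemma det_pow: "A \<in> carrier_mat n n \<Longrightarrow> det (A ^\<^sub>m k) = det A ^ k"
proof (induction k)
  case 0 then show ?case by simp
next
  case (Suc k)
  then show ?case using det_mult[OF pow_carrier_mat[OF Suc.prems] Suc.prems] by simp
qed

lemma exists_W: fixes v :: "'k::field vec"
  assumes v: "v \<in> carrier_vec N" "v \<noteq> 0\<^sub>v N"
  shows "\<exists>W. W \<in> carrier_mat N N \<and> det W \<noteq> 0 \<and> W *\<^sub>v unit_vec N 0 = v"
proof -
  obtain k where k: "k < N" "v $ k \<noteq> 0"
  proof (rule ccontr)
    assume "\<not> thesis"
    hence "\<forall>k<N. v $ k = 0" using that by blast
    hence "v = 0\<^sub>v N" using v(1) by (intro eq_vecI) auto
    thus False using v(2) by simp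
  qed
  have N: "0 < N" using k by simp
  define W where "W = mat N N (\<lambda>(i,j). if j = 0 then v $ i else if j = k then (if i = 0 then 1 else 0)
     else (if i = j then 1 else 0))"
  have Wc: "W \<in> carrier_mat N N" unfolding W_def by simp
  have We: "W *\<^sub>v unit_vec N 0 = v"
    by (rule eq_vecI) (use v N in \<open>auto simp: W_def\<close>)
  have comp: "(W *\<^sub>v u) $ i = v $ i * u $ 0 + (if i = 0 \<and> k \<noteq> 0 then u $ k else 0)
      + (if i \<noteq> 0 \<and> i \<noteq> k then u $ i else 0)" if u: "u \<in> carrier_vec N" and i: "i < N" for u i
  proof -
    have "(W *\<^sub>v u) $ i = (\<Sum>j\<in>{0..<N}. W $$ (i,j) * u $ j)"
      using u i Wc by (simp add: scalar_prod_def)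
    also have "\<dots> = (\<Sum>j\<in>{0..<N}. (if j = 0 then v $ i * u $ 0 else 0)
        + (if j = k then (if k \<noteq> 0 \<and> i = 0 then u $ k else 0) else 0)
        + (if j = i then (if i \<noteq> 0 \<and> i \<noteq> k then u $ i else 0) else 0))"
      by (intro sum.cong refl) (use i in \<open>auto simp: W_def\<close>)
    also have "\<dots> = v $ i * u $ 0 + (if i = 0 \<and> k \<noteq> 0 then u $ k else 0)
      + (if i \<noteq> 0 \<and> i \<noteq> k then u $ i else 0)"
      using N k i by (simp add: sum.distrib)
    finally show ?thesis .
  qed
  have "det W \<noteq> 0"
  proof
    assume "det W = 0"
    then obtain u where u: "u \<in> carrier_vec N" "u \<noteq> 0\<^sub>v N" "W *\<^sub>v u = 0\<^sub>v N"
      using det_0_iff_vec_prod_zero[OF Wc] by blast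
    have z: "v $ i * u $ 0 + (if i = 0 \<and> k \<noteq> 0 then u $ k else 0)
      + (if i \<noteq> 0 \<and> i \<noteq> k then u $ i else 0) = 0" if "i < N" for i
      using comp[OF u(1) that] u(3) that by simp
    have u0: "u $ 0 = 0"
    proof (cases "k = 0")
      case True
      thus ?thesis using z[OF N] k by simp
    next
      case False
      thus ?thesis using z[OF k(1)] k by simp
    qed
    have "u $ i = 0" if i: "i < N" for i
    proof (cases "i = 0")
      case True thus ?thesis using u0 by simp
    next
      case False
      show ?thesis
      proof (cases "i = k")
        case True
        thus ?thesis using z[OF N] u0 False by simp
      next
        case False2: False
        thus ?thesis using z[OF i] u0 False by simp
      qed
    qed
    hence "u = 0\<^sub>v N" using u(1) by (intro eq_vecI) auto
    thus False using u(2) by simp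
  qed
  thus ?thesis using Wc We by blast
qed

lemma pow_conj: assumes W: "W \<in> carrier_mat n n" and Wi: "Wi \<in> carrier_mat n n" and X: "X \<in> carrier_mat n n"
  and WWi: "W * Wi = 1\<^sub>m n" and WiW: "Wi * W = 1\<^sub>m n"
  shows "(Wi * X * W) ^\<^sub>m k = Wi * X ^\<^sub>m k * W"
proof (induction k)
  case 0 then show ?case using WiW W Wi X by simp
next
  case (Suc k)
  have Xk: "X ^\<^sub>m k \<in> carrier_mat n n" using X by simp
  have e: "W * (Wi * (X * W)) = X * W"
  proof -
    have "W * (Wi * (X * W)) = (W * Wi) * (X * W)"
      by (rule assoc_mult_mat[symmetric, OF W Wi mult_carrier_mat[OF X W]])
    thus ?thesis unfolding WWi using X W by simp
  qed
  have "(Wi * X * W) ^\<^sub>m Suc k = (Wi * X ^\<^sub>m k * W) * (Wi * X * W)" using Suc by simp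
  also have "\<dots> = Wi * (X ^\<^sub>m k * (W * (Wi * (X * W))))"
    using W Wi X Xk mult_carrier_mat[OF Xk W] mult_carrier_mat[OF X W] mult_carrier_mat[OF Wi mult_carrier_mat[OF X W]]
      mult_carrier_mat[OF Wi Xk]
    by (simp add: assoc_mult_mat[of _ n n _ n _ n])
  also have "\<dots> = Wi * (X ^\<^sub>m k * X) * W"
    unfolding e using W Wi X Xk mult_carrier_mat[OF Xk X] mult_carrier_mat[OF X W] mult_carrier_mat[OF Wi mult_carrier_mat[OF Xk X]]
    by (simp add: assoc_mult_mat[of _ n n _ n _ n])
  finally show ?case by simp
qed

lemma block_pow: assumes A1: "A1 \<in> carrier_mat 1 1" and A2: "A2 \<in> carrier_mat 1 n" and A3: "A3 \<in> carrier_mat n n"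
  shows "\<exists>B. B \<in> carrier_mat 1 n \<and>
    (four_block_mat A1 A2 (0\<^sub>m n 1) A3) ^\<^sub>m k = four_block_mat (A1 ^\<^sub>m k) B (0\<^sub>m n 1) (A3 ^\<^sub>m k)"
proof (induction k)
  case 0
  have "(four_block_mat A1 A2 (0\<^sub>m n 1) A3) ^\<^sub>m 0 = 1\<^sub>m (1 + n)" using A1 A3 by simp
  also have "\<dots> = four_block_mat (1\<^sub>m 1) (0\<^sub>m 1 n) (0\<^sub>m n 1) (1\<^sub>m n)" by simp
  finally show ?case using A1 A3 by (intro exI[of _ "0\<^sub>m 1 n"]) simp
next
  case (Suc k)
  then obtain B where B: "B \<in> carrier_mat 1 n"
    and eq: "(four_block_mat A1 A2 (0\<^sub>m n 1) A3) ^\<^sub>m k = four_block_mat (A1 ^\<^sub>m k) B (0\<^sub>m n 1) (A3 ^\<^sub>m k)" by blast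
  have A1k: "A1 ^\<^sub>m k \<in> carrier_mat 1 1" and A3k: "A3 ^\<^sub>m k \<in> carrier_mat n n" using A1 A3 by auto
  have "(four_block_mat A1 A2 (0\<^sub>m n 1) A3) ^\<^sub>m Suc k
     = four_block_mat (A1 ^\<^sub>m k) B (0\<^sub>m n 1) (A3 ^\<^sub>m k) * four_block_mat A1 A2 (0\<^sub>m n 1) A3"
    using eq by simp
  also have "\<dots> = four_block_mat (A1 ^\<^sub>m k * A1 + B * 0\<^sub>m n 1) (A1 ^\<^sub>m k * A2 + B * A3)
      (0\<^sub>m n 1 * A1 + A3 ^\<^sub>m k * 0\<^sub>m n 1) (0\<^sub>m n 1 * A2 + A3 ^\<^sub>m k * A3)"
    by (rule mult_four_block_mat[OF A1k B zero_carrier_mat A3k A1 A2 zero_carrier_mat A3])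
  also have "\<dots> = four_block_mat (A1 ^\<^sub>m Suc k) (A1 ^\<^sub>m k * A2 + B * A3) (0\<^sub>m n 1) (A3 ^\<^sub>m Suc k)"
  proof -
    have c1: "A1 ^\<^sub>m k * A1 \<in> carrier_mat 1 1" using mult_carrier_mat[OF A1k A1] .
    have c3: "A3 ^\<^sub>m k * A3 \<in> carrier_mat n n" using mult_carrier_mat[OF A3k A3] .
    have "B * 0\<^sub>m n 1 = 0\<^sub>m 1 1" using B by simp
    moreover have "0\<^sub>m n 1 * A1 + A3 ^\<^sub>m k * 0\<^sub>m n 1 = 0\<^sub>m n 1"
      using A1 right_mult_zero_mat[OF A3k, of 1] by simp
    moreover have "0\<^sub>m n 1 * A2 = 0\<^sub>m n n" using A2 by simp
    ultimately show ?thesis using right_add_zero_mat[OF c1] left_add_zero_mat[OF c3] by simp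
  qed
  finally show ?case using A1k A2 B A3 by (intro exI[of _ "A1 ^\<^sub>m k * A2 + B * A3"]) auto
qed


lemma nil_triang:
  fixes X :: "'k::field mat"
  shows "X \<in> carrier_mat n n \<Longrightarrow> X ^\<^sub>m k = 0\<^sub>m n n \<Longrightarrow>
    \<exists>T P Q. similar_mat_wit X T P Q \<and> T \<in> carrier_mat n n \<and> upper_triangular T \<and> (\<forall>i<n. T $$ (i,i) = 0)"
proof (induction n arbitrary: X k)
  case 0
  have "similar_mat_wit X X (1\<^sub>m 0) (1\<^sub>m 0)" using similar_mat_wit_refl[OF 0(1)] .
  moreover have "upper_triangular X" using 0(1) unfolding upper_triangular_def by auto
  ultimately show ?case using 0(1) by blast
next
  case (Suc n X k)
  let ?N = "Suc n"
  have X: "X \<in> carrier_mat ?N ?N" and Xk: "X ^\<^sub>m k = 0\<^sub>m ?N ?N" using Suc.prems by auto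
  have "det X = 0"
  proof (rule ccontr)
    assume "det X \<noteq> 0"
    hence "det (X ^\<^sub>m k) \<noteq> 0" using det_pow[OF X] by simp
    thus False using Xk by simp
  qed
  then obtain v where v: "v \<in> carrier_vec ?N" "v \<noteq> 0\<^sub>v ?N" "X *\<^sub>v v = 0\<^sub>v ?N"
    using det_0_iff_vec_prod_zero[OF X] by blast
  obtain W where W: "W \<in> carrier_mat ?N ?N" and dW: "det W \<noteq> 0" and We: "W *\<^sub>v unit_vec ?N 0 = v"
    using exists_W[OF v(1,2)] by blast
  define Wi where "Wi = minv W"
  have Wi: "Wi \<in> carrier_mat ?N ?N" unfolding Wi_def using minv_carrier[OF W] .
  have WWi: "W * Wi = 1\<^sub>m ?N" unfolding Wi_def using minv_right[OF W dW] .
  have WiW: "Wi * W = 1\<^sub>m ?N" unfolding Wi_def using minv_left[OF W dW] .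
  define A' where "A' = Wi * X * W"
  have WiX: "Wi * X \<in> carrier_mat ?N ?N" using mult_carrier_mat[OF Wi X] .
  have A': "A' \<in> carrier_mat ?N ?N" unfolding A'_def using mult_carrier_mat[OF WiX W] .
  have col0: "A' $$ (i, 0) = 0" if i: "i < ?N" for i
  proof -
    have "A' *\<^sub>v unit_vec ?N 0 = (Wi * X) *\<^sub>v (W *\<^sub>v unit_vec ?N 0)"
      unfolding A'_def by (rule assoc_mult_mat_vec[OF WiX W]) simp
    also have "\<dots> = Wi *\<^sub>v (X *\<^sub>v v)" unfolding We by (rule assoc_mult_mat_vec[OF Wi X v(1)])
    also have "\<dots> = 0\<^sub>v ?N" unfolding v(3) by (rule mv_zero[OF Wi])
    moreover have "(A' *\<^sub>v unit_vec ?N 0) $ i = A' $$ (i,0)" by (rule mv_unit_index[OF A' _ i]) simp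
    ultimately show ?thesis using i by simp
  qed
  have A'k: "A' ^\<^sub>m k = 0\<^sub>m ?N ?N" unfolding A'_def pow_conj[OF W Wi X WWi WiW] Xk
    using right_mult_zero_mat[OF Wi] left_mult_zero_mat[OF W] by simp
  obtain A1 A2 A0 A3 where sp: "split_block A' 1 1 = (A1, A2, A0, A3)" by (cases "split_block A' 1 1") auto
  have dims: "dim_row A' = 1 + n" "dim_col A' = 1 + n" using A' by auto
  note spl = split_block[OF sp dims]
  have A1: "A1 \<in> carrier_mat 1 1" and A2: "A2 \<in> carrier_mat 1 n" and A0: "A0 \<in> carrier_mat n 1"
    and A3: "A3 \<in> carrier_mat n n" and A'eq: "A' = four_block_mat A1 A2 A0 A3" using spl by auto
  have A0z: "A0 = 0\<^sub>m n 1"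
  proof (rule eq_matI)
    fix i j assume "i < dim_row (0\<^sub>m n 1 :: 'k mat)" "j < dim_col (0\<^sub>m n 1 :: 'k mat)"
    hence ij: "i < n" "j = 0" by auto
    have "A0 $$ (i,j) = A' $$ (i + 1, j)" using sp[unfolded split_block_def Let_def] ij dims by auto
    thus "A0 $$ (i,j) = 0\<^sub>m n 1 $$ (i,j)" using col0[of "i+1"] ij by simp
  qed (use A0 in auto)
  have A1z: "A1 = 0\<^sub>m 1 1"
  proof (rule eq_matI)
    fix i j assume "i < dim_row (0\<^sub>m 1 1 :: 'k mat)" "j < dim_col (0\<^sub>m 1 1 :: 'k mat)"
    hence ij: "i = 0" "j = 0" by auto
    have "A1 $$ (i,j) = A' $$ (i, j)" using sp[unfolded split_block_def Let_def] ij dims by auto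
    thus "A1 $$ (i,j) = 0\<^sub>m 1 1 $$ (i,j)" using col0[of 0] ij by simp
  qed (use A1 in auto)
  have A3k: "A3 ^\<^sub>m k = 0\<^sub>m n n"
  proof -
    obtain B where B: "B \<in> carrier_mat 1 n"
      and pw: "(four_block_mat A1 A2 (0\<^sub>m n 1) A3) ^\<^sub>m k = four_block_mat (A1 ^\<^sub>m k) B (0\<^sub>m n 1) (A3 ^\<^sub>m k)"
      using block_pow[OF A1 A2 A3] by blast
    have eq0: "four_block_mat (A1 ^\<^sub>m k) B (0\<^sub>m n 1) (A3 ^\<^sub>m k) = 0\<^sub>m ?N ?N"
      using pw A'k A'eq A0z by simp
    show ?thesis
    proof (rule eq_matI)
      fix i j assume "i < dim_row (0\<^sub>m n n :: 'k mat)" "j < dim_col (0\<^sub>m n n :: 'k mat)"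
      hence ij: "i < n" "j < n" by auto
      have "four_block_mat (A1 ^\<^sub>m k) B (0\<^sub>m n 1) (A3 ^\<^sub>m k) $$ (Suc i, Suc j) = (A3 ^\<^sub>m k) $$ (i,j)"
        using ij A1 A3 by simp
      thus "(A3 ^\<^sub>m k) $$ (i,j) = 0\<^sub>m n n $$ (i,j)" using eq0 ij by simp
    qed (use A3 in auto)
  qed
  from Suc.IH[OF A3 A3k] obtain T3 P3 Q3 where sim3: "similar_mat_wit A3 T3 P3 Q3"
    and T3: "T3 \<in> carrier_mat n n" and ut3: "upper_triangular T3" and d3: "\<forall>i<n. T3 $$ (i,i) = 0" by blast
  from similar_mat_witD2[OF A3 sim3] have P3: "P3 \<in> carrier_mat n n" and Q3: "Q3 \<in> carrier_mat n n"
    and PQ3: "P3 * Q3 = 1\<^sub>m n" by auto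
  define C where "C = four_block_mat A1 (A2 * P3) A0 T3"
  have A2P3: "A2 * P3 \<in> carrier_mat 1 n" using mult_carrier_mat[OF A2 P3] .
  have e1: "A2 = 1\<^sub>m 1 * (A2 * P3) * Q3"
  proof -
    have "1\<^sub>m 1 * (A2 * P3) * Q3 = A2 * P3 * Q3" using left_mult_one_mat[OF A2P3] by simp
    also have "\<dots> = A2 * (P3 * Q3)" by (rule assoc_mult_mat[OF A2 P3 Q3])
    finally show ?thesis unfolding PQ3 using A2 by simp
  qed
  have e2: "A0 = P3 * A0 * 1\<^sub>m 1" unfolding A0z using right_mult_zero_mat[OF P3, of 1] by simp
  have simC: "similar_mat_wit A' C (four_block_mat (1\<^sub>m 1) (0\<^sub>m 1 n) (0\<^sub>m n 1) P3)
      (four_block_mat (1\<^sub>m 1) (0\<^sub>m 1 n) (0\<^sub>m n 1) Q3)"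
    unfolding C_def A'eq
    by (rule similar_mat_wit_four_block[OF similar_mat_wit_refl[OF A1] sim3 e1 e2 A1 A3 A0 A2P3])
  have Cc: "C \<in> carrier_mat ?N ?N" using four_block_carrier_mat[OF A1 T3] unfolding C_def by simp
  have utC: "upper_triangular C" unfolding C_def A0z
    by (rule upper_triangular_four_block[OF A1 T3 _ ut3]) (simp add: A1z)
  have dC: "\<forall>i<?N. C $$ (i,i) = 0"
  proof (intro allI impI)
    fix i assume i: "i < ?N"
    show "C $$ (i,i) = 0"
    proof (cases i)
      case 0 thus ?thesis unfolding C_def using A1 T3 A1z by simp
    next
      case (Suc i') thus ?thesis unfolding C_def using A1 T3 d3 i by simp
    qed
  qed
  have XA': "X = W * A' * Wi"
  proof -
    have "W * A' * Wi = (W * Wi) * X * (W * Wi)" unfolding A'_def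
      using W Wi X WiX mult_carrier_mat[OF WiX W] mult_carrier_mat[OF W Wi] mult_carrier_mat[OF X W]
        mult_carrier_mat[OF X Wi] mult_carrier_mat[OF W WiX]
      by (simp add: assoc_mult_mat[of _ ?N ?N _ ?N _ ?N])
    thus ?thesis unfolding WWi using X by simp
  qed
  have simX: "similar_mat_wit X A' W Wi" by (rule similar_mat_witI[OF WWi WiW XA' X A' W Wi])
  from similar_mat_wit_trans[OF simX simC] show ?case using Cc utC dC by blast
qed


definition JB :: "nat list \<Rightarrow> 'k::field mat" where
  "JB ks = diag_block_mat (map (\<lambda>k. jordan_block k 0) ks)"

lemma J_mat_JB: "J_mat ks = JB ks"
  unfolding J_mat_def JB_def jordan_matrix_def by (simp add: o_def)

lemma JB_dims: "dim_row (JB ks :: 'k::field mat) = sum_list ks" "dim_col (JB ks :: 'k::field mat) = sum_list ks"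
proof -
  have d: "dim_row (jordan_block k (0::'k)) = k" "dim_col (jordan_block k (0::'k)) = k" for k
    using jordan_block_carrier[of k "0::'k"] by auto
  have "sum_list (map dim_row (map (\<lambda>k. jordan_block k (0::'k)) ks)) = sum_list ks"
    "sum_list (map dim_col (map (\<lambda>k. jordan_block k (0::'k)) ks)) = sum_list ks"
    by (induct ks) (auto simp: d)
  thus "dim_row (JB ks :: 'k::field mat) = sum_list ks" "dim_col (JB ks :: 'k::field mat) = sum_list ks"
    unfolding JB_def dim_diag_block_mat by auto
qed

lemma JB_carrier: "(JB ks :: 'k::field mat) \<in> carrier_mat (sum_list ks) (sum_list ks)"
  by (rule carrier_matI; rule JB_dims)

lemma JB_Nil: "JB [] = 0\<^sub>m 0 0" unfolding JB_def by simp

lemma JB_Cons: "(JB (x # xs) :: 'k::field mat) = four_block_mat (jordan_block x 0) (0\<^sub>m x (sum_list xs)) (0\<^sub>m (sum_list xs) x) (JB xs)"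
proof -
  have "(JB (x # xs) :: 'k::field mat) = four_block_mat (jordan_block x 0) (0\<^sub>m (dim_row (jordan_block x (0::'k))) (dim_col (JB xs :: 'k mat)))
     (0\<^sub>m (dim_row (JB xs :: 'k mat)) (dim_col (jordan_block x (0::'k)))) (JB xs)"
    unfolding JB_def by (simp only: list.map diag_block_mat.simps Let_def)
  moreover have "dim_row (jordan_block x (0::'k)) = x" "dim_col (jordan_block x (0::'k)) = x"
    using jordan_block_carrier[of x "0::'k"] by auto
  ultimately show ?thesis unfolding JB_dims by simp
qed

lemma JB_single: "(JB [x] :: 'k::field mat) = jordan_block x 0" unfolding JB_def by (simp only: list.map diag_block_mat_singleton)

lemma JB_append: "(JB (xs @ ys) :: 'k::field mat) = four_block_mat (JB xs) (0\<^sub>m (sum_list xs) (sum_list ys)) (0\<^sub>m (sum_list ys) (sum_list xs)) (JB ys)"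
  unfolding JB_def diag_block_mat_append map_append Let_def by (simp add: JB_dims[unfolded JB_def])

lemma swap_blocks: fixes A :: "'k::field mat"
  assumes A: "A \<in> carrier_mat a a" and B: "B \<in> carrier_mat b b"
  shows "similar_mat (four_block_mat A (0\<^sub>m a b) (0\<^sub>m b a) B) (four_block_mat B (0\<^sub>m b a) (0\<^sub>m a b) A)"
proof -
  define P :: "'k mat" where "P = four_block_mat (0\<^sub>m a b) (1\<^sub>m a) (1\<^sub>m b) (0\<^sub>m b a)"
  define Q :: "'k mat" where "Q = four_block_mat (0\<^sub>m b a) (1\<^sub>m b) (1\<^sub>m a) (0\<^sub>m a b)"
  have z1: "(0\<^sub>m a b :: 'k mat) \<in> carrier_mat a b" and z2: "(0\<^sub>m b a :: 'k mat) \<in> carrier_mat b a"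
    and o1: "(1\<^sub>m a :: 'k mat) \<in> carrier_mat a a" and o2: "(1\<^sub>m b :: 'k mat) \<in> carrier_mat b b" by auto
  have PQ: "P * Q = 1\<^sub>m (a + b)" unfolding P_def Q_def
    by (subst mult_four_block_mat[OF z1 o1 o2 z2 z2 o2 o1 z1]) simp
  have QP: "Q * P = 1\<^sub>m (a + b)" unfolding P_def Q_def
    by (subst mult_four_block_mat[OF z2 o2 o1 z1 z1 o1 o2 z2]) (simp add: add.commute)
  have M2P: "P * four_block_mat B (0\<^sub>m b a) (0\<^sub>m a b) A = four_block_mat (0\<^sub>m a b) A B (0\<^sub>m b a)"
    unfolding P_def by (subst mult_four_block_mat[OF z1 o1 o2 z2 B z2 z1 A]) (use A B in simp)
  have M: "four_block_mat A (0\<^sub>m a b) (0\<^sub>m b a) B = P * four_block_mat B (0\<^sub>m b a) (0\<^sub>m a b) A * Q"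
    unfolding M2P unfolding Q_def by (subst mult_four_block_mat[OF z1 A B z2 z2 o2 o1 z1]) (use A B in simp)
  have "similar_mat_wit (four_block_mat A (0\<^sub>m a b) (0\<^sub>m b a) B) (four_block_mat B (0\<^sub>m b a) (0\<^sub>m a b) A) P Q"
  proof (rule similar_mat_witI[OF PQ QP M])
    show "four_block_mat A (0\<^sub>m a b) (0\<^sub>m b a) B \<in> carrier_mat (a + b) (a + b)" using A B by simp
    show "four_block_mat B (0\<^sub>m b a) (0\<^sub>m a b) A \<in> carrier_mat (a + b) (a + b)"
      using four_block_carrier_mat[OF B A] by (simp add: add.commute)
    show "P \<in> carrier_mat (a + b) (a + b)" unfolding P_def using four_block_carrier_mat[OF z1 z2] by (simp add: add.commute)
    show "Q \<in> carrier_mat (a + b) (a + b)" unfolding Q_def using four_block_carrier_mat[OF z2 z1] by (simp add: add.commute)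
  qed
  thus ?thesis unfolding similar_mat_def by blast
qed

lemma sum_list_mset: "mset xs = mset ys \<Longrightarrow> sum_list (xs :: nat list) = sum_list ys"
  by (metis sum_mset_sum_list)

lemma JB_perm: "mset xs = mset ys \<Longrightarrow> similar_mat (JB xs :: 'k::field mat) (JB ys)"
proof (induction xs arbitrary: ys)
  case Nil
  hence "ys = []" by simp
  thus ?case using similar_mat_refl[OF JB_carrier[of "[]"]] by simp
next
  case (Cons x xs)
  hence "x \<in> set ys" by (metis list.set_intros(1) set_mset_mset)
  then obtain y1 y2 where ys: "ys = y1 @ x # y2" by (meson split_list)
  have ms: "mset xs = mset (y1 @ y2)" using Cons.prems ys by simp
  have sl: "sum_list xs = sum_list (y1 @ y2)" using sum_list_mset[OF ms] .
  have IH: "similar_mat (JB xs :: 'k mat) (JB (y1 @ y2))" using Cons.IH[OF ms] .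
  have s1: "similar_mat (JB (x # xs) :: 'k mat) (JB (x # y1 @ y2))"
    unfolding JB_Cons sl[symmetric]
    by (rule similar_mat_four_block_0_0[OF similar_mat_refl[OF jordan_block_carrier] IH jordan_block_carrier JB_carrier])
  have s2: "similar_mat (JB (x # y1) :: 'k mat) (JB (y1 @ [x]))"
  proof -
    have "similar_mat (JB (x # y1) :: 'k mat) (four_block_mat (JB y1) (0\<^sub>m (sum_list y1) x) (0\<^sub>m x (sum_list y1)) (jordan_block x 0))"
      unfolding JB_Cons by (rule swap_blocks[OF jordan_block_carrier JB_carrier])
    thus ?thesis unfolding JB_append JB_single by simp
  qed
  have s3: "similar_mat (JB ((x # y1) @ y2) :: 'k mat) (JB ((y1 @ [x]) @ y2))"
  proof -
    have e: "sum_list (y1 @ [x]) = sum_list (x # y1)" by simp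
    show ?thesis unfolding JB_append[of "x # y1"] JB_append[of "y1 @ [x]"] e
      by (rule similar_mat_four_block_0_0[OF s2 similar_mat_refl[OF JB_carrier] JB_carrier JB_carrier])
  qed
  have s3': "similar_mat (JB (x # y1 @ y2) :: 'k mat) (JB (y1 @ x # y2))" using s3 by simp
  show ?case using similar_mat_trans[OF s1 s3'] ys by simp
qed


lemma nil_jordan: fixes X :: "'k::field mat"
  assumes X: "X \<in> carrier_mat n n" and Xk: "X ^\<^sub>m k = 0\<^sub>m n n"
  shows "\<exists>ks. similar_mat X (J_mat ks) \<and> 0 \<notin> set ks \<and> sum_list ks = n"
proof -
  obtain T P Q where sw: "similar_mat_wit X T P Q" and T: "T \<in> carrier_mat n n"
    and ut: "upper_triangular T" and d0: "\<forall>i<n. T $$ (i,i) = 0"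
    using nil_triang[OF X Xk] by blast
  define nas where "nas = triangular_to_jnf_vector T"
  have jnf: "jordan_nf T nas" unfolding nas_def by (rule triangular_to_jnf_vector[OF T ut])
  hence nz: "0 \<notin> fst ` set nas" and simT: "similar_mat T (jordan_matrix nas)" unfolding jordan_nf_def by auto
  have cp1: "char_poly T = (\<Prod>(k,a)\<leftarrow>nas. [:-a,1:]^k)" by (rule jordan_nf_char_poly[OF jnf])
  have "diag_mat T = replicate n 0" unfolding diag_mat_def using T d0 by (intro nth_equalityI) auto
  hence cp2: "char_poly T = [:0,1:]^n" using char_poly_upper_triangular[OF T ut] by simp
  have a0: "snd p = 0" if p: "p \<in> set nas" for p
  proof (rule ccontr)
    assume a: "snd p \<noteq> 0"
    obtain kk b where pk: "p = (kk, b)" by force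
    have kk: "kk \<noteq> 0" using nz p pk by force
    have "poly (char_poly T) b = prod_list (map (\<lambda>q. poly q b) (map (\<lambda>(k,a). [:-a,1:]^k) nas))"
      unfolding cp1 by (simp add: poly_prod_list)
    also have "\<dots> = 0"
    proof -
      have mem: "poly ([:-b,1:]^kk) b \<in> set (map (\<lambda>q. poly q b) (map (\<lambda>(k,a). [:-a,1:]^k) nas))"
        using p pk by force
      have z: "poly ([:-b,1:]^kk) b = 0" using kk by (simp add: poly_power)
      have "0 \<in> set (map (\<lambda>q. poly q b) (map (\<lambda>(k,a). [:-a,1:]^k) nas))" using mem unfolding z .
      thus ?thesis by (simp only: prod_list_zero_iff)
    qed
    finally have "poly (char_poly T) b = 0" .
    moreover have "poly (char_poly T) b = b ^ n" unfolding cp2 by (simp add: poly_power)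
    ultimately show False using a pk by simp
  qed
  define ks where "ks = map fst nas"
  have Jeq: "J_mat ks = jordan_matrix nas"
  proof -
    have "map (\<lambda>k. (k, 0)) ks = nas" unfolding ks_def map_map o_def
    proof (rule map_idI)
      fix x assume "x \<in> set nas"
      thus "(fst x, 0) = x" using a0[OF \<open>x \<in> set nas\<close>] by (simp add: prod_eq_iff)
    qed
    thus ?thesis unfolding J_mat_def by simp
  qed
  have nz': "0 \<notin> set ks" using nz unfolding ks_def by simp
  have simX: "similar_mat X T" using sw unfolding similar_mat_def by blast
  from similar_matD[OF simT] obtain n' P' Q' where "{T, jordan_matrix nas, P', Q'} \<subseteq> carrier_mat n' n'" by blast
  hence "n' = n" "jordan_matrix nas \<in> carrier_mat n' n'" using T by auto
  hence "dim_row (jordan_matrix nas) = n" by (metis carrier_matD(1))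
  hence "sum_list ks = n" unfolding ks_def jordan_matrix_dim .
  moreover have "similar_mat X (J_mat ks)" unfolding Jeq by (rule similar_mat_trans[OF simX simT])
  ultimately show ?thesis using nz' by blast
qed

lemma nilpotent_conj: fixes X :: "'k::field mat"
  assumes X: "X \<in> carrier_mat n n" and Xk: "X ^\<^sub>m k = 0\<^sub>m n n"
  shows "\<exists>ps \<in> partitions n. \<exists>P \<in> GL n. X * P = P * J_mat ps"
proof -
  obtain ks where sim: "similar_mat X (J_mat ks)" and nz: "0 \<notin> set ks" and sl: "sum_list ks = n"
    using nil_jordan[OF X Xk] by blast
  define ps where "ps = rev (sort ks)"
  have ms: "mset ks = mset ps" unfolding ps_def by simp
  have ps: "ps \<in> partitions n" unfolding partitions_def
  proof (intro CollectI conjI)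
    show "sorted_wrt (\<ge>) ps" unfolding ps_def sorted_wrt_rev by simp
    show "\<forall>x\<in>set ps. 0 < x"
    proof
      fix x assume "x \<in> set ps"
      hence "x \<in> set ks" unfolding ps_def by simp
      thus "0 < x" using nz by (metis gr0I)
    qed
    show "sum_list ps = n" using sum_list_mset[OF ms] sl by simp
  qed
  have "similar_mat (J_mat ks :: 'k mat) (J_mat ps)" unfolding J_mat_JB by (rule JB_perm[OF ms])
  with sim have "similar_mat X (J_mat ps)" by (rule similar_mat_trans)
  then obtain P Q where w: "similar_mat_wit X (J_mat ps) P Q" unfolding similar_mat_def by blast
  from similar_mat_witD2[OF X w] have PQ: "P * Q = 1\<^sub>m n" and QP: "Q * P = 1\<^sub>m n" and Xe: "X = P * J_mat ps * Q"
    and P: "P \<in> carrier_mat n n" and Q: "Q \<in> carrier_mat n n" and J: "(J_mat ps :: 'k mat) \<in> carrier_mat n n" by auto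
  have "X * P = P * J_mat ps * (Q * P)" unfolding Xe using P Q J mult_carrier_mat[OF P J] mult_carrier_mat[OF J Q]
     mult_carrier_mat[OF Q P] by (simp add: assoc_mult_mat[of _ n n _ n _ n])
  also have "\<dots> = P * J_mat ps" unfolding QP using right_mult_one_mat[OF mult_carrier_mat[OF P J]] .
  finally have XP: "X * P = P * J_mat ps" .
  have "invertible_mat P" unfolding invertible_mat_def inverts_mat_def square_mat.simps
    using P Q PQ QP by (intro conjI exI[of _ Q]) auto
  hence "P \<in> GL n" unfolding GL_def using P by simp
  thus ?thesis using ps XP by blast
qed

lemma J_carrier: "ps \<in> partitions n \<Longrightarrow> (J_mat ps :: 'k::field mat) \<in> carrier_mat n n"
  unfolding J_mat_JB partitions_def using JB_carrier by auto

lemma dbm_zero: "diag_block_mat (map (\<lambda>k. 0\<^sub>m k k) ks) = (0\<^sub>m (sum_list ks) (sum_list ks) :: 'k::field mat)"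
proof (induction ks)
  case Nil then show ?case by simp
next
  case (Cons k ks)
  then show ?case by (simp add: Let_def)
qed

lemma J_nilpotent: "ps \<in> partitions n \<Longrightarrow> (J_mat ps :: 'k::field mat) \<in> nilcone n"
proof -
  assume ps: "ps \<in> partitions n"
  have sl: "sum_list ps = n" using ps unfolding partitions_def by auto
  have blk: "(jordan_block k (0::'k)) ^\<^sub>m n = 0\<^sub>m k k" if "k \<in> set ps" for k
  proof -
    have kn: "k \<le> n" using member_le_sum_list[OF that] sl by simp
    show ?thesis unfolding jordan_block_zero_pow using kn by (intro eq_matI) auto
  qed
  have "(J_mat ps :: 'k mat) ^\<^sub>m n = diag_block_mat (map (\<lambda>(k, a). jordan_block k a ^\<^sub>m n) (map (\<lambda>k. (k, 0::'k)) ps))"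
    unfolding J_mat_def by (rule jordan_matrix_pow)
  also have "\<dots> = diag_block_mat (map (\<lambda>k. 0\<^sub>m k k) ps)"
    using blk by (simp add: o_def cong: map_cong)
  also have "\<dots> = 0\<^sub>m n n" unfolding dbm_zero sl ..
  finally show ?thesis unfolding nilcone_def using J_carrier[OF ps] by blast
qed

lemma length_le_sum: "\<forall>x\<in>set xs. 0 < (x::nat) \<Longrightarrow> length xs \<le> sum_list xs"
  by (induction xs) auto

lemma partitions_finite: "finite (partitions n)"
proof -
  have "partitions n \<subseteq> {xs. set xs \<subseteq> {..n} \<and> length xs \<le> n}"
  proof
    fix ps assume "ps \<in> partitions n"
    hence ps: "\<forall>x\<in>set ps. 0 < x" "sum_list ps = n" unfolding partitions_def by auto
    have "set ps \<subseteq> {..n}" using member_le_sum_list[of _ ps] ps(2) by auto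
    moreover have "length ps \<le> n" using length_le_sum[OF ps(1)] ps(2) by simp
    ultimately show "ps \<in> {xs. set xs \<subseteq> {..n} \<and> length xs \<le> n}" by simp
  qed
  moreover have "finite {xs. set xs \<subseteq> {..n} \<and> length xs \<le> n}" by (rule finite_lists_length_le) simp
  ultimately show ?thesis by (rule finite_subset)
qed


lemma finite_factor: assumes "finite (f ` A)" and "\<And>x y. x \<in> A \<Longrightarrow> y \<in> A \<Longrightarrow> f x = f y \<Longrightarrow> g x = g y"
  shows "finite (g ` A)"
proof -
  have "g ` A \<subseteq> (\<lambda>z. g (SOME x. x \<in> A \<and> f x = z)) ` (f ` A)"
  proof
    fix y assume "y \<in> g ` A"
    then obtain x where x: "x \<in> A" "y = g x" by blast
    have "\<exists>x'. x' \<in> A \<and> f x' = f x" using x by blast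
    hence s: "(SOME x'. x' \<in> A \<and> f x' = f x) \<in> A \<and> f (SOME x'. x' \<in> A \<and> f x' = f x) = f x" by (rule someI_ex)
    hence "g (SOME x'. x' \<in> A \<and> f x' = f x) = g x" using assms(2) x(1) by blast
    thus "y \<in> (\<lambda>z. g (SOME x. x \<in> A \<and> f x = z)) ` (f ` A)" using x by force
  qed
  thus ?thesis using assms(1) finite_subset by blast
qed

lemma umc: "v \<in> carrier_vec n \<Longrightarrow> - v \<in> carrier_vec n" by simp

lemma vec_ident3: "(a::'k::field vec) \<in> carrier_vec m \<Longrightarrow> c \<in> carrier_vec m \<Longrightarrow> c + a = -(-a) + c"
  by (rule eq_vecI) auto

lemma vec_ident4: "(x::'k::field vec) \<in> carrier_vec m \<Longrightarrow> a \<in> carrier_vec m \<Longrightarrow> b \<in> carrier_vec m \<Longrightarrow>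
  (x + a) + b = x + (a + b)"
  by (rule eq_vecI) auto

lemma vec_ident5: "(x::'k::field vec) \<in> carrier_vec m \<Longrightarrow> a \<in> carrier_vec m \<Longrightarrow> c \<in> carrier_vec m \<Longrightarrow>
  x + c = (x + a) + (c + -a)"
  by (rule eq_vecI) auto

lemma vec_ident6: "(a::'k::field vec) \<in> carrier_vec m \<Longrightarrow> c \<in> carrier_vec m \<Longrightarrow> -a + c = c + -a"
  by (rule eq_vecI) auto

context
  fixes n m :: nat and \<rho> :: "'k::field mat \<Rightarrow> 'k mat" and J :: "'k mat"
  assumes inf: "infinite (UNIV :: 'k set)" and rr: "rational_rep n m \<rho>" and Jc: "J \<in> carrier_mat n n"
begin

definition jcos :: "'k vec \<Rightarrow> 'k vec set" where
  "jcos w = (\<lambda>u. w + u) ` JM n m \<rho> J"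

definition Phi :: "'k vec set \<Rightarrow> 'k vec set set" where
  "Phi C = (\<lambda>g. (\<lambda>x. \<rho> g *\<^sub>v x) ` C) ` centralizer n J"

lemma DJ: "d_rep n m \<rho> J \<in> carrier_mat m m" by (rule d_rep_carrier)

lemma cent_GL: "h \<in> centralizer n J \<Longrightarrow> h \<in> GL n" unfolding centralizer_def by simp

lemma cent_int: "h \<in> centralizer n J \<Longrightarrow> d_rep n m \<rho> J * \<rho> h = \<rho> h * d_rep n m \<rho> J"
proof -
  assume h: "h \<in> centralizer n J"
  from h have "h * J = J * h" unfolding centralizer_def by simp
  hence "J * h = h * J" by simp
  thus ?thesis by (rule d_rep_intertwine[OF inf rr cent_GL[OF h] Jc Jc])
qed

lemma cos_shift: assumes x: "x \<in> carrier_vec m" and v: "v \<in> carrier_vec m"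
  shows "jcos (x + d_rep n m \<rho> J *\<^sub>v v) = jcos x"
proof
  let ?D = "d_rep n m \<rho> J"
  have Dv: "?D *\<^sub>v v \<in> carrier_vec m" using mult_mat_vec_carrier[OF DJ v] .
  show "jcos (x + ?D *\<^sub>v v) \<subseteq> jcos x"
  proof
    fix y assume "y \<in> jcos (x + ?D *\<^sub>v v)"
    then obtain u where u: "u \<in> carrier_vec m" "y = (x + ?D *\<^sub>v v) + ?D *\<^sub>v u"
      unfolding jcos_def JM_def by blast
    have "y = x + ?D *\<^sub>v (v + u)"
      unfolding u(2) mult_add_distrib_mat_vec[OF DJ v u(1)]
      by (rule vec_ident4[OF x Dv mult_mat_vec_carrier[OF DJ u(1)]])
    moreover have "v + u \<in> carrier_vec m" using v u(1) by simp
    ultimately show "y \<in> jcos x" unfolding jcos_def JM_def by blast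
  qed
  show "jcos x \<subseteq> jcos (x + ?D *\<^sub>v v)"
  proof
    fix y assume "y \<in> jcos x"
    then obtain u where u: "u \<in> carrier_vec m" "y = x + ?D *\<^sub>v u"
      unfolding jcos_def JM_def by blast
    have mv: "- v \<in> carrier_vec m" using v by simp
    have "?D *\<^sub>v (u + - v) = ?D *\<^sub>v u + - (?D *\<^sub>v v)"
      unfolding mult_add_distrib_mat_vec[OF DJ u(1) mv] mv_uminus[OF DJ v] ..
    hence "y = (x + ?D *\<^sub>v v) + ?D *\<^sub>v (u + - v)"
      unfolding u(2) by (simp only: vec_ident5[OF x Dv mult_mat_vec_carrier[OF DJ u(1)]])
    moreover have "u + - v \<in> carrier_vec m" using u(1) v by simp
    ultimately show "y \<in> jcos (x + ?D *\<^sub>v v)" unfolding jcos_def JM_def by blast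
  qed
qed

lemma cos_image: assumes h: "h \<in> centralizer n J" and w: "w \<in> carrier_vec m"
  shows "(\<lambda>x. \<rho> h *\<^sub>v x) ` jcos w = jcos (\<rho> h *\<^sub>v w)"
proof
  let ?D = "d_rep n m \<rho> J"
  have hG: "h \<in> GL n" using cent_GL[OF h] .
  have rh: "\<rho> h \<in> carrier_mat m m" using rep_carrier[OF rr hG] .
  have rhi: "\<rho> (minv h) \<in> carrier_mat m m" using rep_carrier[OF rr GL_minv[OF hG]] .
  have key: "\<rho> h *\<^sub>v (?D *\<^sub>v v) = ?D *\<^sub>v (\<rho> h *\<^sub>v v)" if v: "v \<in> carrier_vec m" for v
    using assoc_mult_mat_vec[OF rh DJ v] assoc_mult_mat_vec[OF DJ rh v] cent_int[OF h] by simp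
  show "(\<lambda>x. \<rho> h *\<^sub>v x) ` jcos w \<subseteq> jcos (\<rho> h *\<^sub>v w)"
  proof
    fix y assume "y \<in> (\<lambda>x. \<rho> h *\<^sub>v x) ` jcos w"
    then obtain u where u: "u \<in> carrier_vec m" "y = \<rho> h *\<^sub>v (w + ?D *\<^sub>v u)"
      unfolding jcos_def JM_def by blast
    have "y = \<rho> h *\<^sub>v w + ?D *\<^sub>v (\<rho> h *\<^sub>v u)"
      unfolding u(2) mult_add_distrib_mat_vec[OF rh w mult_mat_vec_carrier[OF DJ u(1)]] key[OF u(1)] ..
    moreover have "\<rho> h *\<^sub>v u \<in> carrier_vec m" using mult_mat_vec_carrier[OF rh u(1)] .
    ultimately show "y \<in> jcos (\<rho> h *\<^sub>v w)" unfolding jcos_def JM_def by blast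
  qed
  show "jcos (\<rho> h *\<^sub>v w) \<subseteq> (\<lambda>x. \<rho> h *\<^sub>v x) ` jcos w"
  proof
    fix y assume "y \<in> jcos (\<rho> h *\<^sub>v w)"
    then obtain u where u: "u \<in> carrier_vec m" "y = \<rho> h *\<^sub>v w + ?D *\<^sub>v u"
      unfolding jcos_def JM_def by blast
    define u' where "u' = \<rho> (minv h) *\<^sub>v u"
    have u': "u' \<in> carrier_vec m" unfolding u'_def using mult_mat_vec_carrier[OF rhi u(1)] .
    have "\<rho> h *\<^sub>v u' = u" unfolding u'_def
      using assoc_mult_mat_vec[OF rh rhi u(1), symmetric] rep_minv_right[OF rr hG] u(1) by simp
    hence "y = \<rho> h *\<^sub>v (w + ?D *\<^sub>v u')"
      unfolding u(2) mult_add_distrib_mat_vec[OF rh w mult_mat_vec_carrier[OF DJ u']] key[OF u'] by simp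
    moreover have "w + ?D *\<^sub>v u' \<in> jcos w" unfolding jcos_def JM_def using u' by blast
    ultimately show "y \<in> (\<lambda>x. \<rho> h *\<^sub>v x) ` jcos w" by blast
  qed
qed

lemma Phi_cos: "w \<in> carrier_vec m \<Longrightarrow> Phi (jcos w) = (\<lambda>h. jcos (\<rho> h *\<^sub>v w)) ` centralizer n J"
  unfolding Phi_def using cos_image by (intro image_cong) auto

lemma cent_one: "1\<^sub>m n \<in> centralizer n J"
  unfolding centralizer_def using GL_one Jc by simp

lemma cent_mult: "h \<in> centralizer n J \<Longrightarrow> g \<in> centralizer n J \<Longrightarrow> h * g \<in> centralizer n J"
proof -
  assume h: "h \<in> centralizer n J" and g: "g \<in> centralizer n J"
  have hc: "h \<in> carrier_mat n n" and gc: "g \<in> carrier_mat n n" using h g cent_GL GL_carrier by auto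
  have hJ: "h * J = J * h" and gJ: "g * J = J * g" using h g unfolding centralizer_def by auto
  have "h * g * J = h * (g * J)" using hc gc Jc by simp
  also have "\<dots> = (h * J) * g" unfolding gJ using hc gc Jc by simp
  also have "\<dots> = J * (h * g)" unfolding hJ using hc gc Jc by simp
  finally show ?thesis unfolding centralizer_def using GL_mult cent_GL h g by auto
qed

lemma orbit_to_Phi: assumes w: "w \<in> carrier_vec m" and w': "w' \<in> carrier_vec m"
  and eq: "semidirect_orbit n m \<rho> (J, w) = semidirect_orbit n m \<rho> (J, w')"
  shows "Phi (jcos w') \<subseteq> Phi (jcos w)"
proof -
  let ?D = "d_rep n m \<rho> J"
  have "(J, w') \<in> semidirect_orbit n m \<rho> (J, w)" unfolding eq by (rule orb_refl[OF inf rr Jc w'])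
  then obtain g v where g: "g \<in> GL n" and v: "v \<in> carrier_vec m" and Jg: "J * g = g * J"
    and w'e: "w' = -(?D *\<^sub>v v) + \<rho> g *\<^sub>v w" unfolding orb_iff by blast
  have gC: "g \<in> centralizer n J" unfolding centralizer_def using g Jg by simp
  show ?thesis unfolding Phi_cos[OF w] Phi_cos[OF w']
  proof
    fix C assume "C \<in> (\<lambda>h. jcos (\<rho> h *\<^sub>v w')) ` centralizer n J"
    then obtain h where h: "h \<in> centralizer n J" and C: "C = jcos (\<rho> h *\<^sub>v w')" by blast
    have hG: "h \<in> GL n" using cent_GL[OF h] .
    have rh: "\<rho> h \<in> carrier_mat m m" using rep_carrier[OF rr hG] .
    have rg: "\<rho> g \<in> carrier_mat m m" using rep_carrier[OF rr g] .
    have Dv: "?D *\<^sub>v v \<in> carrier_vec m" using mult_mat_vec_carrier[OF DJ v] .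
    have rhv: "\<rho> h *\<^sub>v v \<in> carrier_vec m" using mult_mat_vec_carrier[OF rh v] .
    have key: "\<rho> h *\<^sub>v (?D *\<^sub>v v) = ?D *\<^sub>v (\<rho> h *\<^sub>v v)"
      using assoc_mult_mat_vec[OF rh DJ v] assoc_mult_mat_vec[OF DJ rh v] cent_int[OF h] by simp
    have rhg: "\<rho> h *\<^sub>v (\<rho> g *\<^sub>v w) = \<rho> (h * g) *\<^sub>v w"
      using assoc_mult_mat_vec[OF rh rg w] rep_mult[OF rr hG g] by simp
    have rhgw: "\<rho> (h * g) *\<^sub>v w \<in> carrier_vec m" using mult_mat_vec_carrier[OF rep_carrier[OF rr GL_mult[OF hG g]] w] .
    have "\<rho> h *\<^sub>v w' = -(?D *\<^sub>v (\<rho> h *\<^sub>v v)) + \<rho> (h * g) *\<^sub>v w"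
      unfolding w'e mult_add_distrib_mat_vec[OF rh umc[OF Dv] mult_mat_vec_carrier[OF rg w]]
        mv_uminus[OF rh Dv] key rhg ..
    also have "\<dots> = \<rho> (h * g) *\<^sub>v w + ?D *\<^sub>v (- (\<rho> h *\<^sub>v v))"
      unfolding mv_uminus[OF DJ rhv] by (rule vec_ident6[OF mult_mat_vec_carrier[OF DJ rhv] rhgw])
    finally have "C = jcos (\<rho> (h * g) *\<^sub>v w)" unfolding C using cos_shift[OF rhgw umc[OF rhv]] by simp
    thus "C \<in> (\<lambda>h. jcos (\<rho> h *\<^sub>v w)) ` centralizer n J" using cent_mult[OF h gC] by blast
  qed
qed

lemma Phi_to_orbit: assumes w: "w \<in> carrier_vec m" and w': "w' \<in> carrier_vec m"
  and eq: "Phi (jcos w) = Phi (jcos w')"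
  shows "semidirect_orbit n m \<rho> (J, w') = semidirect_orbit n m \<rho> (J, w)"
proof -
  let ?D = "d_rep n m \<rho> J"
  have "jcos w' \<in> Phi (jcos w')" unfolding Phi_cos[OF w'] using cent_one rep_one[OF rr] w' by force
  hence "jcos w' \<in> Phi (jcos w)" unfolding eq .
  then obtain h where h: "h \<in> centralizer n J" and ce: "jcos w' = jcos (\<rho> h *\<^sub>v w)" unfolding Phi_cos[OF w] by blast
  have "w' \<in> jcos w'" unfolding jcos_def JM_def
  proof -
    have e: "w' = w' + ?D *\<^sub>v 0\<^sub>v m" using w' mv_zero[OF DJ] by simp
    have mem: "?D *\<^sub>v 0\<^sub>v m \<in> {?D *\<^sub>v v |v. v \<in> carrier_vec m}" by (intro CollectI exI[of _ "0\<^sub>v m"]) simp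
    show "w' \<in> (\<lambda>u. w' + u) ` {?D *\<^sub>v v |v. v \<in> carrier_vec m}" by (rule image_eqI[where f = "\<lambda>u. w' + u", OF e mem])
  qed
  hence "w' \<in> jcos (\<rho> h *\<^sub>v w)" using ce by simp
  hence "w' \<in> (\<lambda>u. \<rho> h *\<^sub>v w + u) ` {?D *\<^sub>v v |v. v \<in> carrier_vec m}" unfolding jcos_def JM_def .
  then obtain u where u: "u \<in> {?D *\<^sub>v v |v. v \<in> carrier_vec m}" and w'u: "w' = \<rho> h *\<^sub>v w + u"
    unfolding image_iff by blast
  from u obtain v where v: "v \<in> carrier_vec m" and uv: "u = ?D *\<^sub>v v" by blast
  have w'e: "w' = \<rho> h *\<^sub>v w + ?D *\<^sub>v v" using w'u uv by simp
  have hG: "h \<in> GL n" using cent_GL[OF h] .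
  have rh: "\<rho> h \<in> carrier_mat m m" using rep_carrier[OF rr hG] .
  have Jh: "J * h = h * J" using h unfolding centralizer_def by simp
  have "w' = -(?D *\<^sub>v (- v)) + \<rho> h *\<^sub>v w"
    unfolding w'e mv_uminus[OF DJ v] by (rule vec_ident3[OF mult_mat_vec_carrier[OF DJ v] mult_mat_vec_carrier[OF rh w]])
  moreover have "- v \<in> carrier_vec m" using v by simp
  ultimately have "(J, w') \<in> semidirect_orbit n m \<rho> (J, w)" unfolding orb_iff
    by (intro exI[of _ h] exI[of _ "- v"] conjI hG Jc Jh)
  thus ?thesis by (rule orb_eq[OF inf rr Jc w])
qed

lemma quot_orbits_eq: "quot_orbits n m \<rho> J = (\<lambda>w. Phi (jcos w)) ` carrier_vec m"
  unfolding quot_orbits_def Let_def Phi_def jcos_def by (simp add: image_image)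

end


context
  fixes n m :: nat and \<rho> :: "'k::field mat \<Rightarrow> 'k mat" and J :: "'k mat"
  assumes inf: "infinite (UNIV :: 'k set)" and rr: "rational_rep n m \<rho>" and Jc: "J \<in> carrier_mat n n"
begin

lemma fin_quot_of_orbit:
  assumes fin: "finite ((\<lambda>w. semidirect_orbit n m \<rho> (J, w)) ` carrier_vec m)"
  shows "finite (quot_orbits n m \<rho> J)"
  unfolding quot_orbits_eq[OF inf rr Jc]
proof (rule finite_factor[OF fin])
  fix x y assume x: "x \<in> carrier_vec m" and y: "y \<in> carrier_vec m"
    and eq: "semidirect_orbit n m \<rho> (J, x) = semidirect_orbit n m \<rho> (J, y)"
  show "Phi n \<rho> J (jcos n m \<rho> J x) = Phi n \<rho> J (jcos n m \<rho> J y)"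
    using orbit_to_Phi[OF inf rr Jc x y eq] orbit_to_Phi[OF inf rr Jc y x eq[symmetric]] by blast
qed

lemma fin_orbit_of_quot:
  assumes fin: "finite (quot_orbits n m \<rho> J)"
  shows "finite ((\<lambda>w. semidirect_orbit n m \<rho> (J, w)) ` carrier_vec m)"
proof (rule finite_factor[of "\<lambda>w. Phi n \<rho> J (jcos n m \<rho> J w)"])
  show "finite ((\<lambda>w. Phi n \<rho> J (jcos n m \<rho> J w)) ` carrier_vec m)"
    using fin unfolding quot_orbits_eq[OF inf rr Jc] .
  fix x y assume x: "x \<in> carrier_vec m" and y: "y \<in> carrier_vec m"
    and eq: "Phi n \<rho> J (jcos n m \<rho> J x) = Phi n \<rho> J (jcos n m \<rho> J y)"
  show "semidirect_orbit n m \<rho> (J, x) = semidirect_orbit n m \<rho> (J, y)"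
    using Phi_to_orbit[OF inf rr Jc x y eq] by simp
qed

end

theorem lemma1p2:
  fixes n m :: nat and \<rho> :: "'k::field mat \<Rightarrow> 'k mat"
  assumes "alg_closed TYPE('k)"
    and "rational_rep n m \<rho>"
  shows "(\<forall>ps \<in> partitions n. \<forall>w \<in> carrier_vec m. \<forall>u \<in> JM n m \<rho> (J_mat ps).
            (J_mat ps, w + u) \<in> semidirect_orbit n m \<rho> (J_mat ps, w))
       \<and> (finite (semidirect_orbit n m \<rho> ` (nilcone n \<times> carrier_vec m)) \<longleftrightarrow>
            (\<forall>ps \<in> partitions n. finite (quot_orbits n m \<rho> (J_mat ps))))"
proof -
  have inf: "infinite (UNIV :: 'k set)" by (rule alg_closed_infinite[OF assms(1)])
  note rr = assms(2)
  have part1: "\<forall>ps \<in> partitions n. \<forall>w \<in> carrier_vec m. \<forall>u \<in> JM n m \<rho> (J_mat ps).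
            (J_mat ps, w + u) \<in> semidirect_orbit n m \<rho> (J_mat ps, w)"
  proof (intro ballI)
    fix ps and w u :: "'k vec" assume ps: "ps \<in> partitions n" and w: "w \<in> carrier_vec m" and u: "u \<in> JM n m \<rho> (J_mat ps)"
    let ?J = "J_mat ps :: 'k mat"
    let ?D = "d_rep n m \<rho> ?J"
    have Jc: "?J \<in> carrier_mat n n" by (rule J_carrier[OF ps])
    from u obtain v0 where v0: "v0 \<in> carrier_vec m" and uv: "u = ?D *\<^sub>v v0" unfolding JM_def by blast
    have Dv0: "?D *\<^sub>v v0 \<in> carrier_vec m" using mult_mat_vec_carrier[OF d_rep_carrier v0] .
    have "w + u = -(?D *\<^sub>v (- v0)) + \<rho> (1\<^sub>m n) *\<^sub>v w"
      unfolding rep_one[OF rr] mv_uminus[OF d_rep_carrier v0] one_mult_mat_vec[OF w] uv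
      by (rule vec_ident3[OF Dv0 w])
    moreover have "- v0 \<in> carrier_vec m" using v0 by simp
    moreover have "?J * 1\<^sub>m n = 1\<^sub>m n * ?J" using Jc by simp
    ultimately show "(?J, w + u) \<in> semidirect_orbit n m \<rho> (?J, w)" unfolding orb_iff
      by (intro exI[of _ "1\<^sub>m n"] exI[of _ "- v0"] conjI GL_one Jc)
  qed
  have part2: "finite (semidirect_orbit n m \<rho> ` (nilcone n \<times> carrier_vec m)) \<longleftrightarrow>
            (\<forall>ps \<in> partitions n. finite (quot_orbits n m \<rho> (J_mat ps)))"
  proof
    assume fin: "finite (semidirect_orbit n m \<rho> ` (nilcone n \<times> carrier_vec m))"
    show "\<forall>ps \<in> partitions n. finite (quot_orbits n m \<rho> (J_mat ps))"
    proof
      fix ps assume ps: "ps \<in> partitions n"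
      have "(\<lambda>w. semidirect_orbit n m \<rho> (J_mat ps, w)) ` carrier_vec m \<subseteq> semidirect_orbit n m \<rho> ` (nilcone n \<times> carrier_vec m)"
        using J_nilpotent[OF ps] by auto
      hence "finite ((\<lambda>w. semidirect_orbit n m \<rho> (J_mat ps, w)) ` carrier_vec m)" using fin finite_subset by blast
      thus "finite (quot_orbits n m \<rho> (J_mat ps))" by (rule fin_quot_of_orbit[OF inf rr J_carrier[OF ps]])
    qed
  next
    assume all: "\<forall>ps \<in> partitions n. finite (quot_orbits n m \<rho> (J_mat ps))"
    have sub: "semidirect_orbit n m \<rho> ` (nilcone n \<times> carrier_vec m) \<subseteq>
       (\<Union>ps\<in>partitions n. (\<lambda>w. semidirect_orbit n m \<rho> (J_mat ps, w)) ` carrier_vec m)"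
    proof
      fix S assume "S \<in> semidirect_orbit n m \<rho> ` (nilcone n \<times> carrier_vec m)"
      then obtain X w where X: "X \<in> nilcone n" and w: "w \<in> carrier_vec m" and S: "S = semidirect_orbit n m \<rho> (X, w)"
        by auto
      from X obtain k where Xc: "X \<in> carrier_mat n n" and Xk: "X ^\<^sub>m k = 0\<^sub>m n n" unfolding nilcone_def by auto
      obtain ps P where ps: "ps \<in> partitions n" and P: "P \<in> GL n" and XP: "X * P = P * J_mat ps"
        using nilpotent_conj[OF Xc Xk] by blast
      let ?J = "J_mat ps :: 'k mat"
      have Jc: "?J \<in> carrier_mat n n" by (rule J_carrier[OF ps])
      define Pi where "Pi = minv P"
      have Pi: "Pi \<in> GL n" unfolding Pi_def by (rule GL_minv[OF P])
      have Pc: "P \<in> carrier_mat n n" and Pic: "Pi \<in> carrier_mat n n" using P Pi GL_carrier by auto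
      have "Pi * X = Pi * X * (P * Pi)" unfolding Pi_def GL_minv_right[OF P] using Pic Xc by simp
      also have "\<dots> = Pi * (X * P) * Pi" using Pic Xc Pc mult_carrier_mat[OF Pic Xc] mult_carrier_mat[OF Xc Pc]
        mult_carrier_mat[OF Pc Pic] by (simp add: assoc_mult_mat[of _ n n _ n _ n])
      also have "\<dots> = (Pi * P) * ?J * Pi" unfolding XP using Pic Jc Pc mult_carrier_mat[OF Pic Pc]
        mult_carrier_mat[OF Pc Jc] mult_carrier_mat[OF Jc Pic] by (simp add: assoc_mult_mat[of _ n n _ n _ n])
      also have "\<dots> = ?J * Pi" unfolding Pi_def GL_minv_left[OF P] using Jc by simp
      finally have JPi: "?J * Pi = Pi * X" by simp
      have rPi: "\<rho> Pi \<in> carrier_mat m m" using rep_carrier[OF rr Pi] .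
      have rw: "\<rho> Pi *\<^sub>v w \<in> carrier_vec m" using mult_mat_vec_carrier[OF rPi w] .
      have "\<rho> Pi *\<^sub>v w = -(d_rep n m \<rho> ?J *\<^sub>v 0\<^sub>v m) + \<rho> Pi *\<^sub>v w"
        unfolding mv_zero[OF d_rep_carrier] using rw by (intro eq_vecI) auto
      hence mem: "(?J, \<rho> Pi *\<^sub>v w) \<in> semidirect_orbit n m \<rho> (X, w)" unfolding orb_iff
        by (intro exI[of _ Pi] exI[of _ "0\<^sub>v m"] conjI Pi Jc JPi zero_carrier_vec)
      have "semidirect_orbit n m \<rho> (?J, \<rho> Pi *\<^sub>v w) = S" unfolding S by (rule orb_eq[OF inf rr Xc w mem])
      thus "S \<in> (\<Union>ps\<in>partitions n. (\<lambda>w. semidirect_orbit n m \<rho> (J_mat ps, w)) ` carrier_vec m)"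
        using ps rw by blast
    qed
    have "finite (\<Union>ps\<in>partitions n. (\<lambda>w. semidirect_orbit n m \<rho> (J_mat ps, w)) ` carrier_vec m)"
    proof (rule finite_UN_I[OF partitions_finite])
      fix ps assume ps: "ps \<in> partitions n"
      show "finite ((\<lambda>w. semidirect_orbit n m \<rho> (J_mat ps, w)) ` carrier_vec m)"
        using fin_orbit_of_quot[OF inf rr J_carrier[OF ps]] all ps by blast
    qed
    thus "finite (semidirect_orbit n m \<rho> ` (nilcone n \<times> carrier_vec m))" using sub finite_subset by blast
  qed
  show ?thesis using part1 part2 by blast
qed


end
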